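(* Let $\ell\ge2$ be an integer and $n=\frac{3^\ell+1}{2}$. Let $\beta$ be a primitive $2n$-th root of unity in an extension field of $\mathrm{GF}(3)$ and let $\mathbb{M}_\beta(x)$ be its minimal polynomial over $\mathrm{GF}(3)$. Let $\mathcal{C}(\ell)$ be the ternary negacyclic code of length $n$ with check polynomial $\mathbb{M}_\beta(x)$. Then $\mathcal{C}(\ell)$ has parameters $[n,2\ell,d]$ with $d\ge\frac{3^{\ell-1}+1}{2}$, and $\mathcal{C}(\ell)^\perp$ has parameters $[n,n-2\ell,5]$.
   Context: A ternary negacyclic code of length $n$ is an ideal of $\mathrm{GF}(3)[x]/(x^n+1)$; a code with check polynomial $h(x)$ (a monic divisor of $x^n+1$) is the one with generator polynomial $(x^n+1)/h(x)$. $[n,k,d]$ denotes length, dimension, minimum Hamming distance; $\perp$ is the Euclidean dual. *)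

theory Defs
  imports "Berlekamp_Zassenhaus.Finite_Field"
begin

text \<open>The prime field GF(3) is modelled as ''p mod_ring with CARD('p) = 3.
  An extension field of GF(3) is a field 'k of characteristic 3; GF(3) embeds
  into it canonically via the map below.\<close>

definition gf_emb :: "'p::prime_card mod_ring \<Rightarrow> 'k::field" where
  "gf_emb a = of_int (to_int_mod_ring a)"

definition primitive_root_of_unity :: "nat \<Rightarrow> 'k::field \<Rightarrow> bool" where
  "primitive_root_of_unity m b \<longleftrightarrow> b ^ m = 1 \<and> (\<forall>k. 0 < k \<and> k < m \<longrightarrow> b ^ k \<noteq> 1)"

definition is_min_poly :: "'k::field \<Rightarrow> 'p::prime_card mod_ring poly \<Rightarrow> bool" where
  "is_min_poly b m \<longleftrightarrow> monic m \<and> poly (map_poly gf_emb m) b = 0 \<and>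
     (\<forall>q::'p mod_ring poly. q \<noteq> 0 \<longrightarrow> poly (map_poly gf_emb q) b = 0 \<longrightarrow> degree m \<le> degree q)"

text \<open>Words of length n are identified with polynomials of degree < n
  (coefficient i = i-th coordinate). x^n + 1:\<close>
definition negacyc_mod :: "nat \<Rightarrow> 'a::comm_ring_1 poly" where
  "negacyc_mod n = monom 1 n + 1"

text \<open>The negacyclic code of length n with check polynomial h: the ideal of
  GF(q)[x]/(x^n+1) generated by g = (x^n+1)/h, represented by the reduced
  residues.\<close>
definition negacyclic_code_check ::
  "nat \<Rightarrow> 'a::field poly \<Rightarrow> 'a poly set" where
  "negacyclic_code_check n h =
     {(a * (negacyc_mod n div h)) mod negacyc_mod n | a. True}"

definition hamming_dist :: "nat \<Rightarrow> 'a::zero poly \<Rightarrow> 'a poly \<Rightarrow> nat" where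
  "hamming_dist n c c' = card {i. i < n \<and> coeff c i \<noteq> coeff c' i}"

definition min_distance :: "nat \<Rightarrow> 'a::zero poly set \<Rightarrow> nat" where
  "min_distance n C = Min {hamming_dist n c c' | c c'. c \<in> C \<and> c' \<in> C \<and> c \<noteq> c'}"

definition dual_code :: "nat \<Rightarrow> 'a::comm_ring_1 poly set \<Rightarrow> 'a poly set" where
  "dual_code n C = {v. degree v < n \<and> (\<forall>c\<in>C. (\<Sum>i<n. coeff c i * coeff v i) = 0)}"

abbreviation code_dim :: "'a::field poly set \<Rightarrow> nat" where
  "code_dim C \<equiv> vector_space.dim (smult :: 'a \<Rightarrow> 'a poly \<Rightarrow> 'a poly) C"

end

theory Submission
  imports Defs
begin

lemma char3_3: assumes "CHAR('k::field) = 3" shows "(3::'k) = 0"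
  using of_nat_CHAR[where 'a='k] assms by simp

lemma frob3_add: assumes "CHAR('k::field) = 3" shows "((a::'k) + b)^3 = a^3 + b^3"
proof -
  have "(a+b)^3 = a^3 + b^3 + 3*(a*a*b + a*b*b)" by (simp add: algebra_simps power3_eq_cube)
  thus ?thesis using char3_3[OF assms] by simp
qed

lemma frob_add: assumes "CHAR('k::field) = 3" shows "((a::'k) + b)^(3^m) = a^(3^m) + b^(3^m)"
proof (induction m)
  case 0 then show ?case by simp
next
  case (Suc m)
  have "(a+b)^(3^Suc m) = ((a+b)^(3^m))^3" by (simp add: power_mult[symmetric] mult.commute)
  also have "\<dots> = (a^(3^m))^3 + (b^(3^m))^3" using Suc frob3_add[OF assms] by simp
  also have "\<dots> = a^(3^Suc m) + b^(3^Suc m)" by (simp add: power_mult[symmetric] mult.commute)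
  finally show ?case .
qed

lemma frob_neg: "(- (a::'k::field))^(3^m) = - (a^(3^m))"
  by (simp add: power_minus_odd)

lemma frob_diff: assumes "CHAR('k::field) = 3" shows "((a::'k) - b)^(3^m) = a^(3^m) - b^(3^m)"
  using frob_add[OF assms, of a "-b" m] frob_neg[of b m] by simp

lemma frob_sum: assumes "CHAR('k::field) = 3" shows "(\<Sum>i\<in>A. (f i::'k))^(3^m) = (\<Sum>i\<in>A. (f i)^(3^m))"
proof (induction A rule: infinite_finite_induct)
  case (infinite A) then show ?case by simp
next
  case empty then show ?case by simp
next
  case (insert x F) then show ?case by (simp add: frob_add[OF assms])
qed


lemma int012: "(t::int) \<in> {0..<3} \<Longrightarrow> t \<in> {0,1,2}" by auto

locale tern =
  fixes l n :: nat and \<beta> :: "'k::field" and M :: "'p::prime_card mod_ring poly"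
  assumes p3: "CARD('p) = 3" and k3: "CHAR('k) = 3" and l2: "l \<ge> 2"
    and n_def: "n = (3 ^ l + 1) div 2"
    and prim: "primitive_root_of_unity (2 * n) \<beta>"
    and minp: "is_min_poly \<beta> M"
begin

abbreviation e :: "'p mod_ring \<Rightarrow> 'k" where "e \<equiv> gf_emb"

lemma three0: "(3::'k) = 0" using char3_3[OF k3] .

lemma e_add: "e (a + b) = e a + e b"
proof -
  have "e (a+b) = of_int ((to_int_mod_ring a + to_int_mod_ring b) mod int CHAR('k))"
    unfolding gf_emb_def to_int_mod_ring_add p3 k3 by simp
  also have "\<dots> = e a + e b" unfolding of_int_mod_CHAR gf_emb_def by simp
  finally show ?thesis .
qed

lemma e_mult: "e (a * b) = e a * e b"
proof -
  have "e (a*b) = of_int ((to_int_mod_ring a * to_int_mod_ring b) mod int CHAR('k))"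
    unfolding gf_emb_def to_int_mod_ring_mult p3 k3 by simp
  also have "\<dots> = e a * e b" unfolding of_int_mod_CHAR gf_emb_def by simp
  finally show ?thesis .
qed

lemma e_one: "e 1 = 1"
proof -
  have "to_int_mod_ring (1::'p mod_ring) = 1"
    using p3 by (transfer) auto
  thus ?thesis unfolding gf_emb_def by simp
qed

lemma e_zero: "e 0 = 0"
proof -
  have "to_int_mod_ring (0::'p mod_ring) = 0" by transfer auto
  thus ?thesis unfolding gf_emb_def by simp
qed

sublocale e: field_hom e
  by unfold_locales (auto simp: e_add e_mult e_one e_zero)

lemma e_cube: "(e a)^3 = e a"
proof -
  have "to_int_mod_ring a \<in> {0..<3}" using range_to_int_mod_ring[where 'a='p] p3 by auto
  hence r: "to_int_mod_ring a \<in> {0,1,2}" by (rule int012)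
  have "(2::'k)^3 = 2 + 2*3" by simp
  hence "(2::'k)^3 = 2" using three0 by simp
  hence g: "\<And>t::int. t \<in> {0,1,2} \<Longrightarrow> (of_int t::'k)^3 = of_int t" by auto
  show ?thesis unfolding gf_emb_def by (rule g[OF r])
qed

end

lemma not_dvd_pow3: 
  assumes "0 < m" "m < 2 * l" "l \<ge> 1"
  shows "\<not> (3^l + 1 :: nat) dvd (3^m - 1)"
proof
  assume d: "(3^l + 1 :: nat) dvd (3^m - 1)"
  have pos: "(1::nat) < 3^m" using one_less_power[of "3::nat" m] assms(1) by linarith
  consider "m < l" | "m = l" | "l < m" by linarith
  then show False
  proof cases
    case 1
    have "(3::nat)^m < 3^l" using power_strict_increasing[OF 1, of "3::nat"] by linarith
    hence "3^m - 1 < (3^l + 1::nat)" by linarith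
    moreover have "3^m - 1 > (0::nat)" using pos by simp
    ultimately show False using d by (meson nat_dvd_not_less)
  next
    case 2
    have "(3::nat)^l \<ge> 3^1" using power_increasing[OF assms(3), of "3::nat"] by linarith
    hence "(3::nat)^l \<ge> 3" by simp
    hence "3^m - 1 < (3^l + 1::nat)" "3^m - 1 > (0::nat)" using 2 by auto
    thus False using d by (meson nat_dvd_not_less)
  next
    case 3
    define r where "r = m - l"
    have r: "m = l + r" "0 < r" "r < l" using 3 assms r_def by auto
    have e3: "(3::nat)^m = 3^r * 3^l" using r(1) by (simp add: power_add mult.commute)
    have "(3^m - 1) + (3^r + 1) = 3^m + (3^r::nat)" using pos by linarith
    also have "\<dots> = 3^r * (3^l + 1::nat)" using e3 by (simp add: algebra_simps)
    finally have eq: "(3^m - 1) + (3^r + 1) = 3^r * (3^l + 1::nat)" .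
    have "(3^l + 1 :: nat) dvd (3^m - 1) + (3^r + 1)" unfolding eq by (rule dvd_triv_right)
    hence "(3^l + 1 :: nat) dvd (3^r + 1)" using d dvd_add_right_iff[of "3^l+1" "3^m - 1" "3^r+1"] by blast
    moreover have "(3::nat)^r + 1 < 3^l + 1" using power_strict_increasing[OF r(3), of "3::nat"] by linarith
    ultimately show False using nat_dvd_not_less[of "3^r+1" "3^l+1"] by simp
  qed
qed

context tern begin

lemma n2: "2 * n = 3^l + 1"
proof -
  have "odd ((3::nat)^l)" by simp
  then obtain k where "(3::nat)^l = 2*k+1" by (rule oddE)
  thus ?thesis unfolding n_def by simp
qed

lemma l1: "l \<ge> 1" using l2 by simp

lemma n_ge: "n \<ge> 5"
proof -
  have "(3::nat)^l \<ge> 3^2" using power_increasing[OF l2, of "3::nat"] by linarith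
  thus ?thesis using n2 by simp
qed

lemma n_pos: "n > 0" using n_ge by simp

lemma beta_2n: "\<beta>^(2*n) = 1" using prim unfolding primitive_root_of_unity_def by (rule conjunct1)

lemma beta_prim: "0 < k \<Longrightarrow> k < 2*n \<Longrightarrow> \<beta>^k \<noteq> 1"
  using prim unfolding primitive_root_of_unity_def by blast

lemma beta_nz: "\<beta> \<noteq> 0"
proof
  assume "\<beta> = 0"
  hence "\<beta>^(2*n) = 0" using n_pos by (simp add: power_0_left)
  thus False using beta_2n by simp
qed

lemma beta_pow_one: "\<beta>^i = 1 \<longleftrightarrow> (2*n) dvd i"
proof
  assume h: "\<beta>^i = 1"
  have "\<beta>^i = \<beta>^(2*n*(i div (2*n)) + i mod (2*n))" by (simp only: mult_div_mod_eq)
  also have "\<dots> = (\<beta>^(2*n))^(i div (2*n)) * \<beta>^(i mod (2*n))" by (simp only: power_add power_mult)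
  finally have "\<beta>^i = (\<beta>^(2*n))^(i div (2*n)) * \<beta>^(i mod (2*n))" .
  hence "\<beta>^(i mod (2*n)) = 1" using h beta_2n by simp
  moreover have "i mod (2*n) < 2*n" using n_pos by simp
  ultimately have "i mod (2*n) = 0" using beta_prim by (cases "i mod (2*n) = 0") auto
  thus "(2*n) dvd i" by auto
next
  assume "(2*n) dvd i" then obtain c where "i = 2*n*c" by blast
  thus "\<beta>^i = 1" using beta_2n by (simp add: power_mult)
qed

lemma beta_pow_eq: "\<beta>^i = \<beta>^j \<longleftrightarrow> i mod (2*n) = j mod (2*n)"
proof -
  have g: "\<beta>^i = \<beta>^j \<longleftrightarrow> i mod (2*n) = j mod (2*n)" if ij: "j \<le> i" for i j
  proof -
    have "\<beta>^i = \<beta>^j * \<beta>^(i-j)" using ij by (simp add: power_add[symmetric])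
    hence "\<beta>^i = \<beta>^j \<longleftrightarrow> \<beta>^(i-j) = 1" using beta_nz by auto
    also have "\<dots> \<longleftrightarrow> (2*n) dvd (i - j)" by (rule beta_pow_one)
    also have "\<dots> \<longleftrightarrow> i mod (2*n) = j mod (2*n)" using ij by (simp add: mod_eq_dvd_iff_nat)
    finally show ?thesis .
  qed
  show ?thesis using g[of j i] g[of i j] by (cases "j \<le> i") auto
qed

lemma beta_n: "\<beta>^n = -1"
proof -
  have "(\<beta>^n)^2 = \<beta>^(n*2)" by (rule power_mult[symmetric])
  hence "(\<beta>^n)^2 = 1" using beta_2n by (simp add: mult.commute)
  hence "\<beta>^n = 1 \<or> \<beta>^n = -1" by (simp add: power2_eq_1_iff)
  moreover have "\<beta>^n \<noteq> 1" using beta_prim[of n] n_pos by simp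
  ultimately show ?thesis by blast
qed

lemma beta_Q: "\<beta>^(3^l) * \<beta> = 1"
proof -
  have "\<beta>^(3^l) * \<beta> = \<beta>^(Suc (3^l))" by (rule power_Suc2[symmetric])
  also have "Suc (3^l) = 2*n" using n2 by simp
  finally show ?thesis using beta_2n by simp
qed

lemma coprime_2n_3: "coprime (2*n) (3^i)"
proof -
  have "(3::nat) dvd 3^l" using l1 by (simp add: dvd_power)
  hence "\<not> (3::nat) dvd 3^l + 1" using dvd_add_right_iff[of "3::nat" "3^l" 1] by simp
  hence "coprime (3::nat) (3^l + 1)" by (intro prime_imp_coprime) auto
  hence "coprime (3^l + 1) (3::nat)" by (simp add: coprime_commute)
  thus ?thesis using n2 by simp
qed

lemma frob_orbit_distinct:
  assumes "i < 2*l" "j < 2*l" "\<beta>^(3^i) = \<beta>^(3^j)"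
  shows "i = j"
proof (rule ccontr)
  assume "i \<noteq> j"
  then consider "i < j" | "j < i" by linarith
  then show False
  proof cases
    case 1
    have "(3::nat)^i * 3^(j-i) = 3^j" using 1 by (simp add: power_add[symmetric])
    hence "\<beta>^(3^i * 3^(j-i)) = \<beta>^(3^i)" using assms by metis
    hence "(3^i * 3^(j-i)) mod (2*n) = (3^i) mod (2*n)" using beta_pow_eq by blast
    hence "(2*n) dvd (3^i * 3^(j-i) - 3^i)" by (simp add: mod_eq_dvd_iff_nat)
    hence "(2*n) dvd (3^i * (3^(j-i) - 1))" by (simp add: diff_mult_distrib2)
    hence "(2*n) dvd (3^(j-i) - 1)" using coprime_2n_3[of i] by (simp add: coprime_dvd_mult_right_iff)
    moreover have "0 < j - i" "j - i < 2*l" using 1 assms by auto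
    ultimately show False using not_dvd_pow3[of "j-i" l] l1 n2 by simp
  next
    case 2
    have "(3::nat)^j * 3^(i-j) = 3^i" using 2 by (simp add: power_add[symmetric])
    hence "\<beta>^(3^j * 3^(i-j)) = \<beta>^(3^j)" using assms by metis
    hence "(3^j * 3^(i-j)) mod (2*n) = (3^j) mod (2*n)" using beta_pow_eq by blast
    hence "(2*n) dvd (3^j * 3^(i-j) - 3^j)" by (simp add: mod_eq_dvd_iff_nat)
    hence "(2*n) dvd (3^j * (3^(i-j) - 1))" by (simp add: diff_mult_distrib2)
    hence "(2*n) dvd (3^(i-j) - 1)" using coprime_2n_3[of j] by (simp add: coprime_dvd_mult_right_iff)
    moreover have "0 < i - j" "i - j < 2*l" using 2 assms by auto
    ultimately show False using not_dvd_pow3[of "i-j" l] l1 n2 by simp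
  qed
qed

end

lemma polys_deg_eq: "m > 0 \<Longrightarrow> {p::'a::zero poly. degree p < m} = {p. \<forall>i\<ge>m. coeff p i = 0}"
proof safe
  fix p :: "'a poly" and i assume "degree p < m" "m \<le> i" thus "coeff p i = 0" by (simp add: coeff_eq_0)
next
  fix p :: "'a poly" assume m: "m > 0" and h: "\<forall>i\<ge>m. coeff p i = 0"
  show "degree p < m"
  proof (rule ccontr)
    assume "\<not> degree p < m"
    hence "coeff p (degree p) = 0" using h by simp
    hence "p = 0" by simp
    thus False using \<open>\<not> degree p < m\<close> m by simp
  qed
qed

lemma card_polys: "card {p::'a::{finite,zero} poly. \<forall>i\<ge>m. coeff p i = 0} = CARD('a)^m"
proof (induction m)
  case 0
  have "{p::'a poly. \<forall>i\<ge>0. coeff p i = 0} = {0}" by (auto intro: poly_eqI)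
  thus ?case by simp
next
  case (Suc m)
  let ?S = "\<lambda>m. {p::'a poly. \<forall>i\<ge>m. coeff p i = 0}"
  have im: "?S (Suc m) = (\<lambda>(a,p). pCons a p) ` (UNIV \<times> ?S m)"
  proof safe
    fix q :: "'a poly" assume q: "\<forall>i\<ge>Suc m. coeff q i = 0"
    obtain a p where qp: "q = pCons a p" by (cases q) auto
    have "\<forall>i\<ge>m. coeff p i = 0"
    proof (intro allI impI)
      fix i assume "m \<le> i" thus "coeff p i = 0" using q[rule_format, of "Suc i"] qp by simp
    qed
    thus "q \<in> (\<lambda>(a,p). pCons a p) ` (UNIV \<times> ?S m)" using qp by auto
  next
    fix a and p :: "'a poly" and i assume "\<forall>i\<ge>m. coeff p i = 0" "Suc m \<le> i"
    thus "coeff (pCons a p) i = 0" by (cases i) auto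
  qed
  have inj: "inj_on (\<lambda>(a,p). pCons a p) ((UNIV::'a set) \<times> ?S m)" by (auto simp: inj_on_def)
  have c1: "card ((\<lambda>(a,p). pCons a p) ` ((UNIV::'a set) \<times> ?S m)) = card ((UNIV::'a set) \<times> ?S m)"
    using inj by (rule card_image)
  have "card (?S (Suc m)) = card ((UNIV::'a set) \<times> ?S m)" using c1 by (simp only: im)
  also have "\<dots> = CARD('a) * CARD('a)^m" using Suc by (simp add: card_cartesian_product)
  finally show ?case by simp
qed

lemma card_polys_deg: assumes "m > 0" shows "card {p::'a::{finite,zero} poly. degree p < m} = CARD('a)^m"
  unfolding polys_deg_eq[OF assms] by (rule card_polys)

lemma finite_polys_deg: "finite {p::'a::{finite,zero} poly. degree p < m}"
proof (cases "m = 0")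
  case True thus ?thesis by simp
next
  case False
  hence "card {p::'a poly. degree p < m} = CARD('a)^m" using card_polys_deg[of m, where 'a='a] by simp
  hence "card {p::'a poly. degree p < m} > 0" using finite_UNIV_card_ge_0[where 'a='a] by simp
  thus ?thesis by (rule card_ge_0_finite)
qed

lemma poly_sum_lt: fixes p :: "'a::comm_ring_1 poly" assumes "degree p < N" shows "poly p z = (\<Sum>i<N. coeff p i * z^i)"
proof -
  have "poly p z = (\<Sum>i\<le>degree p. coeff p i * z^i)" by (rule poly_altdef)
  also have "\<dots> = (\<Sum>i<N. coeff p i * z^i)"
    by (rule sum.mono_neutral_left) (use assms in \<open>auto simp: coeff_eq_0\<close>)
  finally show ?thesis .
qed

context tern begin

sublocale ep: map_poly_inj_idom_hom e ..

lemma e_pow3: "(e a)^(3^m) = e a"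
proof (induction m)
  case 0 then show ?case by simp
next
  case (Suc m)
  have "(e a)^(3^Suc m) = ((e a)^(3^m))^3" by (simp only: power_Suc2 power_mult)
  thus ?case using Suc e_cube by simp
qed

lemma poly_frob: "(poly (map_poly e p) z)^(3^m) = poly (map_poly e p) (z^(3^m))"
proof -
  have "(poly (map_poly e p) z)^(3^m) = (\<Sum>i\<le>degree p. (e (coeff p i) * z^i)^(3^m))"
    unfolding poly_altdef by (simp add: frob_sum[OF k3])
  also have "\<dots> = (\<Sum>i\<le>degree p. e (coeff p i) * (z^(3^m))^i)"
  proof (intro sum.cong refl)
    fix i
    have "(z^i)^(3^m) = (z^(3^m))^i" by (simp only: power_mult[symmetric] mult.commute)
    thus "(e (coeff p i) * z^i)^(3^m) = e (coeff p i) * (z^(3^m))^i"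
      by (simp only: power_mult_distrib e_pow3)
  qed
  also have "\<dots> = poly (map_poly e p) (z^(3^m))"
    unfolding poly_altdef by simp
  finally show ?thesis .
qed

lemma M_monic: "monic M" using minp unfolding is_min_poly_def by blast
lemma M_root: "poly (map_poly e M) \<beta> = 0" using minp unfolding is_min_poly_def by blast
lemma M_min: "q \<noteq> 0 \<Longrightarrow> poly (map_poly e q) \<beta> = 0 \<Longrightarrow> degree M \<le> degree q"
  using minp unfolding is_min_poly_def by blast

lemma M_nz: "M \<noteq> 0" using M_monic by auto

lemma M_deg_pos: "degree M > 0"
proof (rule ccontr)
  assume "\<not> degree M > 0"
  hence "degree M = 0" by simp
  hence "M = 1" using M_monic by (metis monic_degree_0)
  thus False using M_root by simp
qed

lemma M_dvd: assumes "poly (map_poly e p) \<beta> = 0" shows "M dvd p"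
proof -
  have dm: "p = (p div M) * M + p mod M" by simp
  have "poly (map_poly e (p mod M)) \<beta> = 0"
  proof -
    have "map_poly e ((p div M) * M + p mod M) = map_poly e (p div M) * map_poly e M + map_poly e (p mod M)"
      by (simp only: ep.hom_add ep.hom_mult)
    hence "map_poly e p = map_poly e (p div M) * map_poly e M + map_poly e (p mod M)"
      using dm by metis
    hence "poly (map_poly e p) \<beta> = poly (map_poly e (p div M)) \<beta> * poly (map_poly e M) \<beta> + poly (map_poly e (p mod M)) \<beta>"
      by (metis poly_add poly_mult)
    thus ?thesis using assms M_root by simp
  qed
  moreover have "p mod M = 0 \<or> degree (p mod M) < degree M"
    using degree_mod_less[OF M_nz] by blast
  ultimately have "p mod M = 0" using M_min[of "p mod M"] by force
  thus ?thesis by (simp add: mod_eq_0_iff_dvd)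
qed

lemma M_dvd_iff: "M dvd p \<longleftrightarrow> poly (map_poly e p) \<beta> = 0"
proof
  assume "M dvd p" then obtain r where "p = M * r" by blast
  thus "poly (map_poly e p) \<beta> = 0" using M_root by (simp add: hom_distribs)
qed (rule M_dvd)

lemma beta_pow_Q2: "\<beta>^(3^(2*l)) = \<beta>"
proof -
  have "(\<beta>^(3^l) * \<beta>)^(3^l) = 1" using beta_Q by simp
  hence "(\<beta>^(3^l))^(3^l) * \<beta>^(3^l) = 1" by (simp only: power_mult_distrib)
  moreover have "(\<beta>^(3^l))^(3^l) = \<beta>^(3^(2*l))" by (simp only: power_mult[symmetric] power_add[symmetric] mult_2)
  ultimately have "\<beta>^(3^(2*l)) * \<beta>^(3^l) = \<beta> * \<beta>^(3^l)" using beta_Q by (simp add: mult.commute)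
  moreover have "\<beta>^(3^l) \<noteq> 0" using beta_nz by simp
  ultimately show ?thesis by simp
qed

end

lemma card_roots_le:
  fixes p :: "'a::idom poly"
  assumes "p \<noteq> 0" "A \<subseteq> {x. poly p x = 0}"
  shows "card A \<le> degree p"
proof -
  have "card A \<le> card {x. poly p x = 0}" using assms poly_roots_finite by (metis card_mono)
  also have "\<dots> \<le> degree p" using assms(1) by (rule card_poly_roots_bound)
  finally show ?thesis .
qed

lemma finite_roots_sub:
  fixes p :: "'a::idom poly"
  assumes "p \<noteq> 0" "A \<subseteq> {x. poly p x = 0}"
  shows "finite A"
  using assms poly_roots_finite finite_subset by metis

context tern begin

abbreviation ev :: "'p mod_ring poly \<Rightarrow> 'k" where "ev p \<equiv> poly (map_poly e p) \<beta>"

lemma degM_ge: "degree M \<ge> 2*l"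
proof -
  let ?R = "(\<lambda>j. \<beta>^(3^j)) ` {..<2*l}"
  have inj: "inj_on (\<lambda>j. \<beta>^(3^j)) {..<2*l}"
    using frob_orbit_distinct by (auto simp: inj_on_def)
  have cR: "card ?R = 2*l" using card_image[OF inj] by simp
  have sub: "?R \<subseteq> {x. poly (map_poly e M) x = 0}"
  proof
    fix x assume "x \<in> ?R"
    then obtain j where x: "x = \<beta>^(3^j)" by blast
    have "poly (map_poly e M) x = (ev M)^(3^j)" unfolding x by (rule poly_frob[symmetric])
    thus "x \<in> {x. poly (map_poly e M) x = 0}" using M_root by simp
  qed
  have nz: "map_poly e M \<noteq> 0" using M_nz by simp
  have "card ?R \<le> degree (map_poly e M)" by (rule card_roots_le[OF nz sub])
  thus ?thesis using cR by simp
qed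

definition Fix :: "'k set" where "Fix = {z. z^(3^(2*l)) = z}"

lemma Fix_card: "finite Fix \<and> card Fix \<le> 3^(2*l)"
proof -
  define N where "N = (3::nat)^(2*l)"
  have N2: "N \<ge> 2"
  proof -
    have "(3::nat)^(2*l) \<ge> 3^1" using l1 by (intro power_increasing) auto
    thus ?thesis unfolding N_def by simp
  qed
  define P :: "'k poly" where "P = monom 1 N + monom (-1) 1"
  have d1: "degree (monom (-1::'k) 1) < degree (monom (1::'k) N)" using N2 by (simp add: degree_monom_eq)
  have dP: "degree P = N" unfolding P_def using degree_add_eq_left[OF d1] by (simp add: degree_monom_eq)
  hence Pnz: "P \<noteq> 0" using N2 by auto
  have sub: "Fix \<subseteq> {x. poly P x = 0}" unfolding Fix_def P_def N_def by (auto simp: poly_monom)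
  show ?thesis using card_roots_le[OF Pnz sub] finite_roots_sub[OF Pnz sub] dP N_def by simp
qed

lemma Fix_mult: "a \<in> Fix \<Longrightarrow> b \<in> Fix \<Longrightarrow> a * b \<in> Fix"
  unfolding Fix_def by (simp add: power_mult_distrib)

lemma beta_Fix: "\<beta> \<in> Fix" unfolding Fix_def using beta_pow_Q2 by simp

lemma beta_pow_Fix: "\<beta>^i \<in> Fix"
proof -
  have "(\<beta>^i)^(3^(2*l)) = (\<beta>^(3^(2*l)))^i" by (simp only: power_mult[symmetric] mult.commute)
  thus ?thesis unfolding Fix_def using beta_pow_Q2 by simp
qed

lemma ev_Fix: "ev p \<in> Fix"
  unfolding Fix_def using poly_frob[of p \<beta> "2*l"] beta_pow_Q2 by simp

lemma degM_le: "degree M \<le> 2*l"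
proof (rule ccontr)
  assume "\<not> degree M \<le> 2*l"
  hence big: "degree M > 2*l" by simp
  let ?P = "{p::'p mod_ring poly. degree p < 2*l+1}"
  have "inj_on ev ?P"
  proof (rule inj_onI)
    fix p q assume p: "p \<in> ?P" and q: "q \<in> ?P" and eq: "ev p = ev q"
    show "p = q"
    proof (rule ccontr)
      assume "p \<noteq> q"
      hence nz: "p - q \<noteq> 0" by simp
      have "ev (p - q) = 0" using eq by (simp add: hom_distribs)
      hence "degree M \<le> degree (p - q)" using M_min nz by blast
      moreover have "degree (p - q) \<le> 2*l" using p q degree_diff_le[of p "2*l" q] by simp
      ultimately show False using big by simp
    qed
  qed
  moreover have "ev ` ?P \<subseteq> Fix" using ev_Fix by blast
  ultimately have "card ?P \<le> card Fix" using Fix_card by (intro card_inj_on_le) auto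
  also have "\<dots> \<le> 3^(2*l)" using Fix_card by simp
  finally have "card ?P \<le> 3^(2*l)" .
  moreover have "card ?P = 3^(2*l+1)" using card_polys_deg[of "2*l+1", where 'a="'p mod_ring"] p3 by simp
  ultimately show False by simp
qed

lemma degM: "degree M = 2*l" using degM_ge degM_le by simp

definition K :: "'k set" where "K = ev ` {p. degree p < 2*l}"

lemma K_card: "card K = 3^(2*l)"
proof -
  have "inj_on ev {p. degree p < 2*l}"
  proof (rule inj_onI)
    fix p q assume p: "p \<in> {p. degree p < 2*l}" and q: "q \<in> {p. degree p < 2*l}" and eq: "ev p = ev q"
    show "p = q"
    proof (rule ccontr)
      assume "p \<noteq> q"
      hence nz: "p - q \<noteq> 0" by simp
      have "ev (p - q) = 0" using eq by (simp add: hom_distribs)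
      hence "degree M \<le> degree (p - q)" using M_min nz by blast
      moreover have "degree (p - q) < 2*l" using p q degree_diff_less[of p "2*l" q] l1 by simp
      ultimately show False using degM by simp
    qed
  qed
  hence "card K = card {p::'p mod_ring poly. degree p < 2*l}" unfolding K_def by (rule card_image)
  also have "\<dots> = 3^(2*l)" using card_polys_deg[of "2*l", where 'a="'p mod_ring"] p3 l1 by simp
  finally show ?thesis .
qed

lemma K_Fix: "K \<subseteq> Fix" unfolding K_def using ev_Fix by blast

lemma K_diff: "a \<in> K \<Longrightarrow> b \<in> K \<Longrightarrow> a - b \<in> K"
proof -
  assume "a \<in> K" "b \<in> K"
  then obtain p q where p: "degree p < 2*l" "a = ev p" and q: "degree q < 2*l" "b = ev q"
    unfolding K_def by blast
  have "a - b = ev (p - q)" using p q by (simp add: hom_distribs)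
  moreover have "degree (p - q) < 2*l" using p q degree_diff_less[of p "2*l" q] l1 by simp
  ultimately show "a - b \<in> K" unfolding K_def by blast
qed

lemma K_zero: "0 \<in> K"
proof -
  have "ev 0 = 0" by simp
  moreover have "degree (0::'p mod_ring poly) < 2*l" using l1 by simp
  ultimately show ?thesis unfolding K_def by (intro image_eqI[of _ _ 0]) auto
qed

end

context tern begin

definition Tr :: "'k \<Rightarrow> 'k" where "Tr z = (\<Sum>k<2*l. z^(3^k))"

lemma Tr_add: "Tr (a + b) = Tr a + Tr b"
  unfolding Tr_def by (simp add: frob_add[OF k3] sum.distrib)

lemma Tr_neg: "Tr (- a) = - Tr a"
  unfolding Tr_def by (simp add: frob_neg sum_negf)

lemma Tr_diff: "Tr (a - b) = Tr a - Tr b"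
  using Tr_add[of a "-b"] Tr_neg[of b] by simp

lemma Tr_emult: "Tr (e c * z) = e c * Tr z"
  unfolding Tr_def by (simp add: power_mult_distrib e_pow3 sum_distrib_left)

lemma Tr_zero: "Tr 0 = 0" unfolding Tr_def by (simp add: power_0_left)

lemma Tr_cube: assumes "z \<in> Fix" shows "(Tr z)^3 = Tr z"
proof -
  let ?f = "\<lambda>k. z^(3^k)"
  have "(Tr z)^(3^1) = (\<Sum>k<2*l. (?f k)^(3^1))" unfolding Tr_def by (rule frob_sum[OF k3])
  also have "\<dots> = (\<Sum>k<2*l. ?f (Suc k))"
    by (intro sum.cong refl) (simp only: power_mult[symmetric] power_Suc2 power_one_right)
  finally have a: "(Tr z)^3 = (\<Sum>k<2*l. ?f (Suc k))" by simp
  have b: "(\<Sum>k<Suc (2*l). ?f k) = ?f 0 + (\<Sum>k<2*l. ?f (Suc k))" by (rule sum.lessThan_Suc_shift)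
  have c: "(\<Sum>k<Suc (2*l). ?f k) = (\<Sum>k<2*l. ?f k) + ?f (2*l)" by (rule sum.lessThan_Suc)
  have d: "?f (2*l) = ?f 0" using assms unfolding Fix_def by simp
  show ?thesis using a b c d unfolding Tr_def by simp
qed

lemma cube_range: assumes "(w::'k)^3 = w" shows "w \<in> range e"
proof -
  have "w * (w - 1) * (w + 1) = w^3 - w" by (simp add: algebra_simps power3_eq_cube)
  hence "w * (w - 1) * (w + 1) = 0" using assms by simp
  hence "w = 0 \<or> w = 1 \<or> w = -1" by (auto simp: add_eq_0_iff2)
  moreover have "0 \<in> range e" "1 \<in> range e" "-1 \<in> range e"
    using e.hom_zero e.hom_one e.hom_uminus[of 1] by (metis rangeI)+
  ultimately show ?thesis by blast
qed

definition ie :: "'k \<Rightarrow> 'p mod_ring" where "ie w = (SOME a. e a = w)"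

lemma e_ie: "w \<in> range e \<Longrightarrow> e (ie w) = w"
  unfolding ie_def by (rule someI_ex) auto

lemma ie_e: "ie (e a) = a"
  using e_ie[of "e a"] e.injectivity by blast

lemma Tr_range: "z \<in> Fix \<Longrightarrow> Tr z \<in> range e"
  using Tr_cube cube_range by blast

lemma e_ie_Tr: "z \<in> Fix \<Longrightarrow> e (ie (Tr z)) = Tr z"
  using Tr_range e_ie by blast

lemma l_pos: "2*l - 1 < 2*l" using l1 by simp

lemma nondeg: assumes "\<mu> \<noteq> 0" shows "\<exists>t\<in>K. Tr (t * \<mu>) \<noteq> 0"
proof (rule ccontr)
  assume "\<not> (\<exists>t\<in>K. Tr (t * \<mu>) \<noteq> 0)"
  hence all: "\<forall>t\<in>K. Tr (t * \<mu>) = 0" by blast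
  define R :: "'k poly" where "R = (\<Sum>k<2*l. monom (\<mu>^(3^k)) (3^k))"
  have polyR: "poly R x = Tr (x * \<mu>)" for x
    unfolding R_def Tr_def by (simp add: poly_sum poly_monom power_mult_distrib mult.commute)
  have "coeff R (3^(2*l-1)) = (\<Sum>k<2*l. if k = 2*l-1 then \<mu>^(3^k) else 0)"
    unfolding R_def coeff_sum coeff_monom by (intro sum.cong refl) auto
  also have "\<dots> = \<mu>^(3^(2*l-1))" using l_pos by simp
  finally have cR: "coeff R (3^(2*l-1)) \<noteq> 0" using assms by simp
  hence Rnz: "R \<noteq> 0" by auto
  have dR: "degree R \<le> 3^(2*l-1)" unfolding R_def
  proof (rule degree_sum_le)
    fix k assume "k \<in> {..<2*l}"
    hence "k \<le> 2*l-1" by simp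
    hence "(3::nat)^k \<le> 3^(2*l-1)" by (rule power_increasing) simp
    thus "degree (monom (\<mu>^(3^k)) (3^k)) \<le> 3^(2*l-1)" using degree_monom_le le_trans by blast
  qed simp
  have "K \<subseteq> {x. poly R x = 0}" using all polyR by auto
  hence "card K \<le> degree R" by (rule card_roots_le[OF Rnz])
  hence "card K \<le> 3^(2*l-1)" using dR by linarith
  moreover have "(3::nat)^(2*l-1) < 3^(2*l)" using l_pos by (intro power_strict_increasing) auto
  ultimately show False using K_card by linarith
qed

end

lemma pow3_ge: "l \<ge> 1 \<Longrightarrow> 4 * l \<le> (3::nat)^l + 1"
proof (induction l rule: dec_induct)
  case base then show ?case by simp
next
  case (step m) then show ?case by simp
qed

context tern begin

abbreviation X :: "'p mod_ring poly" where "X \<equiv> negacyc_mod n"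

lemma degX: "degree X = n"
proof -
  have "degree (1::'p mod_ring poly) < degree (monom (1::'p mod_ring) n)" using n_pos by (simp add: degree_monom_eq)
  thus ?thesis unfolding negacyc_mod_def using degree_add_eq_left by (metis degree_monom_eq one_neq_zero)
qed

lemma X_nz: "X \<noteq> 0" using degX n_pos by auto

lemma n_ge_2l: "2*l \<le> n" using pow3_ge[OF l1] n2 by linarith

lemma M_dvd_X: "M dvd X"
proof (rule M_dvd)
  show "ev X = 0" unfolding negacyc_mod_def using beta_n by (simp add: hom_distribs poly_monom)
qed

definition g :: "'p mod_ring poly" where "g = X div M"

lemma gM: "g * M = X" unfolding g_def using M_dvd_X by simp

lemma g_nz: "g \<noteq> 0" using gM X_nz by auto

lemma deg_g: "degree g + 2*l = n"
  using degree_mult_eq[OF g_nz M_nz] gM degX degM by simp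

abbreviation CC :: "'p mod_ring poly set" where "CC \<equiv> negacyclic_code_check n M"

lemma C_eq: "CC = {r * g | r. degree r < 2*l}"
proof safe
  fix c assume "c \<in> CC"
  then obtain a where c: "c = (a * g) mod X" unfolding negacyclic_code_check_def g_def by blast
  define r where "r = a - ((a*g) div X) * M"
  have cr: "c = r * g"
  proof -
    have "c = a*g - ((a*g) div X) * X" unfolding c by (simp add: minus_div_mult_eq_mod)
    also have "\<dots> = r * g" unfolding r_def using gM by (simp add: algebra_simps)
    finally show ?thesis .
  qed
  have "degree r < 2*l"
  proof (cases "r = 0")
    case True thus ?thesis using l1 by simp
  next
    case False
    hence cnz: "c \<noteq> 0" using cr g_nz by simp
    have "degree c < n" using degree_mod_less'[OF X_nz, of "a*g"] cnz c degX by simp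
    thus ?thesis using cr degree_mult_eq[OF False g_nz] deg_g by simp
  qed
  thus "\<exists>r. c = r * g \<and> degree r < 2*l" using cr by blast
next
  fix r :: "'p mod_ring poly" assume r: "degree r < 2*l"
  have "degree (r * g) < degree X"
  proof (cases "r = 0")
    case True thus ?thesis using degX n_pos by simp
  next
    case False thus ?thesis using degree_mult_eq[OF False g_nz] deg_g r degX by simp
  qed
  hence "(r * g) mod X = r * g" by (rule mod_poly_less)
  thus "r * g \<in> CC" unfolding negacyclic_code_check_def g_def by (metis (mono_tags, lifting) mem_Collect_eq)
qed

end

lemma prod_lin_dvd:
  fixes p :: "'a::field poly"
  assumes "finite S" "\<forall>s\<in>S. poly p s = 0"
  shows "(\<Prod>s\<in>S. [:-s,1:]) dvd p"
  using assms
proof (induction S arbitrary: p rule: finite_induct)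
  case empty then show ?case by simp
next
  case (insert a S)
  have "[:-a,1:] dvd p" using insert.prems poly_eq_0_iff_dvd by blast
  then obtain q where pq: "p = [:-a,1:] * q" by blast
  have "\<forall>s\<in>S. poly q s = 0"
  proof
    fix s assume s: "s \<in> S"
    hence "s \<noteq> a" using insert.hyps by auto
    moreover have "poly p s = 0" using insert.prems s by blast
    ultimately show "poly q s = 0" using pq by simp
  qed
  hence "(\<Prod>s\<in>S. [:-s,1:]) dvd q" by (rule insert.IH)
  hence "[:-a,1:] * (\<Prod>s\<in>S. [:-s,1:]) dvd [:-a,1:] * q" by (rule mult_dvd_mono[OF dvd_refl])
  thus ?case using pq insert.hyps by simp
qed

context tern begin

definition Rt :: "'k set" where "Rt = (\<lambda>j. \<beta>^j) ` {j. j < 2*n \<and> odd j}"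

lemma odd_set: "{j::nat. j < 2*n \<and> odd j} = (\<lambda>i. 2*i+1) ` {..<n}"
proof safe
  fix j :: nat assume "j < 2*n" "odd j"
  then obtain i where "j = 2*i+1" by (metis oddE)
  moreover have "i < n" using \<open>j < 2*n\<close> calculation by simp
  ultimately show "j \<in> (\<lambda>i. 2*i+1) ` {..<n}" by blast
qed auto

lemma Rt_card: "finite Rt \<and> card Rt = n"
proof -
  have i1: "inj_on (\<lambda>i::nat. 2*i+1) {..<n}" by (auto simp: inj_on_def)
  have c1: "card {j::nat. j < 2*n \<and> odd j} = n" unfolding odd_set using card_image[OF i1] by simp
  have i2: "inj_on (\<lambda>j. \<beta>^j) {j. j < 2*n \<and> odd j}"
    by (auto simp: inj_on_def beta_pow_eq)
  have "card Rt = n" unfolding Rt_def using card_image[OF i2] c1 by simp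
  moreover have "finite Rt" using \<open>card Rt = n\<close> n_pos card_ge_0_finite[of Rt] by simp
  ultimately show ?thesis by blast
qed


lemma Xk_eq: "(map_poly e X) = monom 1 n + 1" unfolding negacyc_mod_def by (simp add: hom_distribs)

lemma Rt_roots: "s \<in> Rt \<Longrightarrow> poly (map_poly e X) s = 0"
proof -
  assume "s \<in> Rt"
  then obtain j where j: "s = \<beta>^j" "odd j" unfolding Rt_def by blast
  have "s^n = (\<beta>^n)^j" unfolding j by (simp only: power_mult[symmetric] mult.commute)
  also have "\<dots> = -1" using beta_n j(2) by simp
  finally show ?thesis unfolding Xk_eq by (simp add: poly_monom)
qed

lemma Xk_dvd: assumes "\<forall>s\<in>Rt. poly F s = 0" shows "(map_poly e X) dvd F"
proof -
  define Pr where "Pr = (\<Prod>s\<in>Rt. [:-s,1:])"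
  have fin: "finite Rt" using Rt_card by blast
  have PF: "Pr dvd F" unfolding Pr_def using prod_lin_dvd[OF fin assms] .
  have PX: "Pr dvd (map_poly e X)" unfolding Pr_def using prod_lin_dvd[OF fin] Rt_roots by blast
  have Pnz: "Pr \<noteq> 0" unfolding Pr_def using fin by simp
  have dP: "degree Pr = n" unfolding Pr_def
    using degree_prod_eq_sum_degree[of Rt "\<lambda>s. [:-s,1:]"] Rt_card by simp
  have Xnz: "(map_poly e X) \<noteq> 0" using X_nz by simp
  have dX: "degree (map_poly e X) = n" using degX by simp
  obtain c where c: "(map_poly e X) = Pr * c" using PX by blast
  have cnz: "c \<noteq> 0" using c Xnz by auto
  have "degree c = 0" using degree_mult_eq[OF Pnz cnz] c dP dX by simp
  then obtain c0 where c0: "c = [:c0:]" by (metis degree_eq_zeroE)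
  have "c0 \<noteq> 0" using cnz c0 by simp
  have "Pr = (map_poly e X) * [:inverse c0:]" using c c0 \<open>c0 \<noteq> 0\<close>
    by (simp add: mult.assoc flip: smult_one)
  hence "(map_poly e X) dvd Pr" by (metis dvd_triv_left)
  thus ?thesis using PF by (rule dvd_trans)
qed

definition phi :: "'k \<Rightarrow> 'p mod_ring poly" where
  "phi t = Poly (map (\<lambda>i. ie (Tr (t * \<beta>^i))) [0..<n])"

lemma coeff_phi: "coeff (phi t) i = (if i < n then ie (Tr (t * \<beta>^i)) else 0)"
  unfolding phi_def by (simp add: nth_default_def)

lemma deg_phi: "degree (phi t) < n"
proof -
  have "phi t \<in> {p. \<forall>i\<ge>n. coeff p i = 0}" by (simp add: coeff_phi)
  thus ?thesis using polys_deg_eq[OF n_pos] by blast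
qed

lemma e_coeff_phi: "t \<in> Fix \<Longrightarrow> i < n \<Longrightarrow> e (coeff (phi t) i) = Tr (t * \<beta>^i)"
  unfolding coeff_phi using e_ie_Tr Fix_mult beta_pow_Fix by simp

lemma poly_e_sum: "degree p < N \<Longrightarrow> poly (map_poly e p) z = (\<Sum>i<N. e (coeff p i) * z^i)"
  using poly_sum_lt[of "map_poly e p" N z] by simp

lemma poly_phi: "t \<in> Fix \<Longrightarrow> poly (map_poly e (phi t)) z = (\<Sum>i<n. Tr (t * \<beta>^i) * z^i)"
  using poly_e_sum[OF deg_phi] e_coeff_phi by simp

end

context tern begin

lemma expand_phi:
  assumes "t \<in> Fix"
  shows "poly (map_poly e (phi t)) (\<beta>^j) = (\<Sum>k<2*l. t^(3^k) * (\<Sum>i<n. (\<beta>^(3^k + j))^i))"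
proof -
  have "poly (map_poly e (phi t)) (\<beta>^j) = (\<Sum>i<n. Tr (t * \<beta>^i) * (\<beta>^j)^i)"
    using poly_phi[OF assms] .
  also have "\<dots> = (\<Sum>i<n. \<Sum>k<2*l. t^(3^k) * (\<beta>^(3^k + j))^i)"
  proof (intro sum.cong refl)
    fix i
    have "Tr (t * \<beta>^i) * (\<beta>^j)^i = (\<Sum>k<2*l. (t * \<beta>^i)^(3^k) * (\<beta>^j)^i)"
      unfolding Tr_def by (simp add: sum_distrib_right)
    also have "\<dots> = (\<Sum>k<2*l. t^(3^k) * (\<beta>^(3^k + j))^i)"
    proof (intro sum.cong refl)
      fix k
      have "(\<beta>^i)^(3^k) = (\<beta>^(3^k))^i" by (simp only: power_mult[symmetric] mult.commute)
      moreover have "(\<beta>^(3^k + j))^i = (\<beta>^(3^k))^i * (\<beta>^j)^i" by (simp only: power_add power_mult_distrib)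
      ultimately show "(t * \<beta>^i)^(3^k) * (\<beta>^j)^i = t^(3^k) * (\<beta>^(3^k + j))^i"
        by (simp add: power_mult_distrib mult.assoc)
    qed
    finally show "Tr (t * \<beta>^i) * (\<beta>^j)^i = (\<Sum>k<2*l. t^(3^k) * (\<beta>^(3^k + j))^i)" .
  qed
  also have "\<dots> = (\<Sum>k<2*l. \<Sum>i<n. t^(3^k) * (\<beta>^(3^k + j))^i)" by (rule sum.swap)
  also have "\<dots> = (\<Sum>k<2*l. t^(3^k) * (\<Sum>i<n. (\<beta>^(3^k + j))^i))" by (simp add: sum_distrib_left)
  finally show ?thesis .
qed

lemma beta_conj_inv: "\<beta>^(3^(k+l)) * \<beta>^(3^k) = 1"
proof -
  have "\<beta>^(3^(k+l)) = (\<beta>^(3^l))^(3^k)" by (simp only: power_add power_mult[symmetric] mult.commute)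
  hence "\<beta>^(3^(k+l)) * \<beta>^(3^k) = (\<beta>^(3^l) * \<beta>)^(3^k)" by (simp add: power_mult_distrib)
  thus ?thesis using beta_Q by simp
qed

lemma phi_roots:
  assumes "t \<in> Fix" "odd j"
  shows "poly (map_poly e (phi t)) (\<beta>^j) = 0 \<or> poly (map_poly e M) (\<beta>^j) = 0"
proof (cases "\<exists>k<2*l. \<beta>^(3^k + j) = 1")
  case True
  then obtain k where k: "\<beta>^(3^k + j) = 1" by blast
  have a: "\<beta>^j * \<beta>^(3^k) = 1" using k by (simp add: power_add mult.commute)
  have b: "\<beta>^(3^(k+l)) * \<beta>^(3^k) = 1" by (rule beta_conj_inv)
  have nz: "\<beta>^(3^k) \<noteq> 0" using beta_nz by simp
  have "\<beta>^j = \<beta>^(3^(k+l))" using a b nz by (metis mult_right_cancel)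
  moreover have "poly (map_poly e M) (\<beta>^(3^(k+l))) = 0"
    using poly_frob[of M \<beta> "k+l"] M_root by (simp add: power_0_left)
  ultimately show ?thesis by simp
next
  case False
  have "(\<Sum>i<n. (\<beta>^(3^k + j))^i) = 0" if k: "k < 2*l" for k
  proof -
    let ?w = "\<beta>^(3^k + j)"
    have w1: "?w \<noteq> 1" using False k by blast
    have "even (3^k + j)" using assms(2) by simp
    then obtain m where m: "3^k + j = 2*m" by blast
    have "?w^n = (\<beta>^(2*n))^m" unfolding m by (simp only: power_mult[symmetric] mult.commute mult.left_commute)
    hence "?w^n = 1" using beta_2n by simp
    thus ?thesis using geometric_sum[OF w1, of n] by simp
  qed
  hence "poly (map_poly e (phi t)) (\<beta>^j) = 0" unfolding expand_phi[OF assms(1)] by simp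
  thus ?thesis by simp
qed

lemma phi_in_C: assumes "t \<in> Fix" shows "phi t \<in> CC"
proof -
  have "\<forall>s\<in>Rt. poly (map_poly e (phi t * M)) s = 0"
  proof
    fix s assume "s \<in> Rt"
    then obtain j where j: "s = \<beta>^j" "odd j" unfolding Rt_def by blast
    show "poly (map_poly e (phi t * M)) s = 0"
      using phi_roots[OF assms j(2)] j(1) by (auto simp: hom_distribs)
  qed
  hence "map_poly e X dvd map_poly e (phi t * M)" by (rule Xk_dvd)
  hence "X dvd phi t * M" by (rule e.dvd_map_poly_hom_imp_dvd)
  hence "g * M dvd phi t * M" using gM by simp
  hence "g dvd phi t" using M_nz by simp
  then obtain s where s: "phi t = g * s" by blast
  have "degree s < 2*l"
  proof (cases "s = 0")
    case True thus ?thesis using l1 by simp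
  next
    case False
    have "degree (phi t) = degree g + degree s" using s degree_mult_eq[OF g_nz False] by simp
    thus ?thesis using deg_phi[of t] deg_g by simp
  qed
  thus ?thesis unfolding C_eq using s by (auto simp: mult.commute)
qed

end

lemma pow3_gt: "l \<ge> 2 \<Longrightarrow> 4 * l < (3::nat)^l"
proof (induction l rule: dec_induct)
  case base then show ?case by simp
next
  case (step m) then show ?case by simp
qed

context tern begin

lemma n_gt_2l: "2*l < n" using pow3_gt[OF l2] n2 by linarith

lemma Tr_sum: "Tr (\<Sum>i\<in>A. f i) = (\<Sum>i\<in>A. Tr (f i))"
proof (induction A rule: infinite_finite_induct)
  case (infinite A) thus ?case by (simp add: Tr_zero)
next
  case empty thus ?case by (simp add: Tr_zero)
next
  case (insert x F) thus ?case by (simp add: Tr_add)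
qed

lemma ev_sum: "degree v < n \<Longrightarrow> ev v = (\<Sum>i<n. e (coeff v i) * \<beta>^i)"
  by (rule poly_e_sum)

lemma orth: assumes "t \<in> Fix" "degree v < n"
  shows "e (\<Sum>i<n. coeff (phi t) i * coeff v i) = Tr (t * ev v)"
proof -
  have "e (\<Sum>i<n. coeff (phi t) i * coeff v i) = (\<Sum>i<n. Tr (t * \<beta>^i) * e (coeff v i))"
    using e_coeff_phi[OF assms(1)] by (simp add: hom_distribs)
  also have "\<dots> = (\<Sum>i<n. Tr (e (coeff v i) * (t * \<beta>^i)))"
    by (simp add: Tr_emult mult.commute)
  also have "\<dots> = Tr (\<Sum>i<n. e (coeff v i) * (t * \<beta>^i))" by (simp add: Tr_sum)
  also have "(\<Sum>i<n. e (coeff v i) * (t * \<beta>^i)) = t * ev v"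
    unfolding ev_sum[OF assms(2)] by (simp add: sum_distrib_left mult.left_commute)
  finally show ?thesis .
qed

lemma phi_inj: "inj_on phi K"
proof (rule inj_onI)
  fix t t' assume t: "t \<in> K" and t': "t' \<in> K" and eq: "phi t = phi t'"
  define d where "d = t - t'"
  have dK: "d \<in> K" unfolding d_def using K_diff t t' .
  have tF: "t \<in> Fix" "t' \<in> Fix" using t t' K_Fix by auto
  have z: "Tr (d * \<beta>^i) = 0" if i: "i < n" for i
  proof -
    have "Tr (t * \<beta>^i) = Tr (t' * \<beta>^i)"
      using e_coeff_phi[OF tF(1) i] e_coeff_phi[OF tF(2) i] eq by simp
    thus ?thesis unfolding d_def by (simp add: algebra_simps Tr_diff)
  qed
  show "t = t'"
  proof (rule ccontr)
    assume "t \<noteq> t'"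
    hence "d \<noteq> 0" unfolding d_def by simp
    then obtain m where m: "m \<in> K" "Tr (m * d) \<noteq> 0" using nondeg by blast
    obtain p where p: "degree p < 2*l" "m = ev p" using m(1) unfolding K_def by blast
    have pn: "degree p < n" using p(1) n_ge_2l by simp
    have "Tr (m * d) = Tr (\<Sum>i<n. e (coeff p i) * (d * \<beta>^i))"
      unfolding p(2) ev_sum[OF pn] by (simp add: sum_distrib_left mult_ac)
    also have "\<dots> = (\<Sum>i<n. e (coeff p i) * Tr (d * \<beta>^i))" by (simp add: Tr_sum Tr_emult)
    also have "\<dots> = 0" using z by simp
    finally show False using m(2) by simp
  qed
qed

lemma card_C: "finite CC \<and> card CC = 3^(2*l)"
proof -
  have i: "inj_on (\<lambda>r. r * g) {r. degree r < 2*l}" using g_nz by (auto simp: inj_on_def)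
  have "CC = (\<lambda>r. r * g) ` {r. degree r < 2*l}" unfolding C_eq by blast
  hence "card CC = card {r::'p mod_ring poly. degree r < 2*l}" using card_image[OF i] by simp
  also have "\<dots> = 3^(2*l)" using card_polys_deg[of "2*l", where 'a="'p mod_ring"] p3 l1 by simp
  finally have "card CC = 3^(2*l)" .
  moreover have "finite CC" using calculation card_ge_0_finite[of CC] by simp
  ultimately show ?thesis by blast
qed

lemma C_phi: "CC = phi ` K"
proof -
  have sub: "phi ` K \<subseteq> CC" using phi_in_C K_Fix by blast
  have "card (phi ` K) = card CC" using card_image[OF phi_inj] K_card card_C by simp
  thus ?thesis using card_subset_eq[OF _ sub] card_C by simp
qed

lemma dual_eq: "dual_code n CC = {v. degree v < n \<and> ev v = 0}"
proof safe
  fix v assume v: "v \<in> dual_code n CC"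
  hence dv: "degree v < n" and o: "\<forall>c\<in>CC. (\<Sum>i<n. coeff c i * coeff v i) = 0"
    unfolding dual_code_def by auto
  show "degree v < n" by (rule dv)
  show "ev v = 0"
  proof (rule ccontr)
    assume "ev v \<noteq> 0"
    then obtain t where t: "t \<in> K" "Tr (t * ev v) \<noteq> 0" using nondeg by blast
    have "phi t \<in> CC" using C_phi t(1) by blast
    hence "(\<Sum>i<n. coeff (phi t) i * coeff v i) = 0" using o by blast
    hence "Tr (t * ev v) = 0" using orth[OF _ dv, of t] t(1) K_Fix by auto
    thus False using t(2) by simp
  qed
next
  fix v assume dv: "degree v < n" and ev0: "ev v = 0"
  show "v \<in> dual_code n CC" unfolding dual_code_def
  proof (safe intro!: dv)
    fix c assume "c \<in> CC"
    then obtain t where t: "t \<in> K" "c = phi t" using C_phi by blast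
    have "e (\<Sum>i<n. coeff c i * coeff v i) = 0" using orth[OF _ dv, of t] t K_Fix ev0 by (auto simp: Tr_zero)
    thus "(\<Sum>i<n. coeff c i * coeff v i) = 0" by simp
  qed
qed

lemma E_eq: "{v. degree v < n \<and> ev v = 0} = {r * M | r. degree r < n - 2*l}"
proof safe
  fix v assume dv: "degree v < n" and ev0: "ev v = 0"
  obtain r where r: "v = M * r" using M_dvd[OF ev0] by blast
  have "degree r < n - 2*l"
  proof (cases "r = 0")
    case True thus ?thesis using n_gt_2l by simp
  next
    case False
    have "degree v = 2*l + degree r" using r degree_mult_eq[OF M_nz False] degM by simp
    thus ?thesis using dv by simp
  qed
  thus "\<exists>r. v = r * M \<and> degree r < n - 2*l" using r by (auto simp: mult.commute)
next
  fix r :: "'p mod_ring poly" assume r: "degree r < n - 2*l"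
  show "degree (r * M) < n"
  proof (cases "r = 0")
    case True thus ?thesis using n_pos by simp
  next
    case False thus ?thesis using degree_mult_eq[OF False M_nz] degM r by simp
  qed
  show "ev (r * M) = 0" using M_root by (simp add: hom_distribs)
qed

end

lemma vs_smult: "vector_space (smult :: 'a::field \<Rightarrow> 'a poly \<Rightarrow> 'a poly)"
  by unfold_locales (simp_all add: smult_add_right smult_add_left)

lemma sum_monoms_coeff:
  fixes r :: "'a::comm_ring_1 poly"
  assumes "degree r < m"
  shows "(\<Sum>i<m. monom (coeff r i) i) = r"
proof (rule poly_eqI)
  fix j
  have "coeff (\<Sum>i<m. monom (coeff r i) i) j = (\<Sum>i<m. if i = j then coeff r i else 0)"
    unfolding coeff_sum coeff_monom by (rule sum.cong) auto
  also have "\<dots> = (if j < m then coeff r j else 0)" by simp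
  also have "\<dots> = coeff r j" using assms by (simp add: coeff_eq_0)
  finally show "coeff (\<Sum>i<m. monom (coeff r i) i) j = coeff r j" .
qed

lemma dim_mult_set:
  fixes h :: "'a::field poly"
  assumes hnz: "h \<noteq> 0"
  shows "vector_space.dim (smult :: 'a \<Rightarrow> 'a poly \<Rightarrow> 'a poly) {r * h | r. degree r < m} = m"
proof -
  interpret vs: vector_space "smult :: 'a \<Rightarrow> 'a poly \<Rightarrow> 'a poly" by (rule vs_smult)
  let ?f = "\<lambda>i. monom (1::'a) i * h"
  let ?B = "?f ` {..<m}"
  let ?V = "{r * h | r. degree r < m}"
  have injf: "inj_on ?f {..<m}"
  proof (rule inj_onI)
    fix i j assume "monom (1::'a) i * h = monom 1 j * h"
    hence "monom (1::'a) i = monom 1 j" using hnz by simp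
    thus "i = j" by (metis monom_eq_iff' one_neq_zero)
  qed
  have cB: "card ?B = m" using card_image[OF injf] by simp
  have BV: "?B \<subseteq> ?V"
  proof
    fix x assume "x \<in> ?B"
    then obtain i where i: "i < m" "x = monom 1 i * h" by blast
    have "degree (monom (1::'a) i) < m" using i by (simp add: degree_monom_eq)
    thus "x \<in> ?V" using i by blast
  qed
  have VB: "?V \<subseteq> vs.span ?B"
  proof
    fix x assume "x \<in> ?V"
    then obtain r where r: "x = r * h" "degree r < m" by blast
    have "x = (\<Sum>i<m. monom (coeff r i) i) * h" using sum_monoms_coeff[OF r(2)] r(1) by simp
    also have "\<dots> = (\<Sum>i<m. smult (coeff r i) (monom 1 i * h))"
      unfolding sum_distrib_right by (rule sum.cong) (simp_all add: smult_monom flip: mult_smult_left)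
    finally have x: "x = (\<Sum>i<m. smult (coeff r i) (monom 1 i * h))" .
    show "x \<in> vs.span ?B" unfolding x
      by (intro vs.span_sum vs.span_scale vs.span_base) blast
  qed
  have ind: "vs.independent ?B"
  proof
    assume "vs.dependent ?B"
    then obtain t u where t: "finite t" "t \<subseteq> ?B" "(\<Sum>v\<in>t. smult (u v) v) = 0" and v: "\<exists>v\<in>t. u v \<noteq> 0"
      unfolding vs.dependent_explicit by blast
    define I where "I = {i. i < m \<and> ?f i \<in> t}"
    have tI: "t = ?f ` I" unfolding I_def using t(2) by auto
    have "I \<subseteq> {..<m}" unfolding I_def by auto
    hence injI: "inj_on ?f I" using inj_on_subset[OF injf] by blast
    have "(\<Sum>v\<in>t. smult (u v) v) = (\<Sum>i\<in>I. smult (u (?f i)) (?f i))"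
      unfolding tI by (rule sum.reindex[OF injI, unfolded comp_def])
    also have "\<dots> = (\<Sum>i\<in>I. monom (u (?f i)) i) * h"
      unfolding sum_distrib_right by (rule sum.cong) (simp_all add: smult_monom flip: mult_smult_left)
    finally have "(\<Sum>i\<in>I. monom (u (?f i)) i) * h = 0" using t(3) by simp
    hence z: "(\<Sum>i\<in>I. monom (u (?f i)) i) = 0" using hnz by simp
    obtain v0 where v0: "v0 \<in> t" "u v0 \<noteq> 0" using v by blast
    then obtain i0 where i0: "i0 \<in> I" "v0 = ?f i0" unfolding tI by blast
    have fI: "finite I" unfolding I_def by simp
    have "coeff (\<Sum>i\<in>I. monom (u (?f i)) i) i0 = (\<Sum>i\<in>I. if i = i0 then u (?f i) else 0)"
      unfolding coeff_sum coeff_monom by (rule sum.cong) auto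
    also have "\<dots> = u (?f i0)" using i0(1) fI by simp
    finally have "u (?f i0) = 0" using z by simp
    thus False using v0 i0 by simp
  qed
  have "card ?B = vs.dim ?V" by (rule vs.basis_card_eq_dim[OF BV VB ind])
  thus ?thesis using cB by simp
qed

context tern begin

lemma dim_C: "code_dim CC = 2*l"
  unfolding C_eq by (rule dim_mult_set[OF g_nz])

lemma dim_D: "code_dim (dual_code n CC) = n - 2*l"
  unfolding dual_eq E_eq by (rule dim_mult_set[OF M_nz])

end

lemma sum_split_add: "(\<Sum>k<(a::nat)+b. f k) = (\<Sum>k<a. f k) + (\<Sum>k<b. (f (a+k) :: 'a::comm_monoid_add))"
  by (induction b) (simp_all add: add.assoc)

context tern begin

lemma zero_count:
  assumes tK: "t \<in> K" and t0: "t \<noteq> 0"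
  shows "card {i. i < n \<and> Tr (t * \<beta>^i) = 0} \<le> 3^(l-1)"
proof -
  define a where "a = (3::nat)^(l-1)"
  have a3: "3^l = 3 * a" unfolding a_def using l1 by (metis power_Suc Suc_pred' less_le_trans zero_less_one)
  define P :: "'k poly" where
    "P = (\<Sum>k<l. monom (t^(3^k)) (a + 3^k) + monom (t^(3^(k+l))) (a - 3^k))"
  have pk: "(3::nat)^k \<le> a" if "k < l" for k
    unfolding a_def using that by (intro power_increasing) auto
  have evP: "poly P u = u^a * Tr (t * u)" if u: "u^(3^l) * u = 1" for u
  proof -
    have uk: "u^(3^(k+l)) * u^(3^k) = 1" for k
    proof -
      have "u^(3^(k+l)) = (u^(3^l))^(3^k)" by (simp only: power_add power_mult[symmetric] mult.commute)
      hence "u^(3^(k+l)) * u^(3^k) = (u^(3^l) * u)^(3^k)" by (simp add: power_mult_distrib)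
      thus ?thesis using u by simp
    qed
    have "Tr (t * u) = (\<Sum>k<l. (t*u)^(3^k)) + (\<Sum>k<l. (t*u)^(3^(l+k)))"
      unfolding Tr_def mult_2 by (rule sum_split_add)
    hence "u^a * Tr (t * u) = (\<Sum>k<l. u^a * (t*u)^(3^k)) + (\<Sum>k<l. u^a * (t*u)^(3^(k+l)))"
      by (simp add: sum_distrib_left algebra_simps add.commute)
    also have "\<dots> = (\<Sum>k<l. t^(3^k) * u^(a + 3^k)) + (\<Sum>k<l. t^(3^(k+l)) * u^(a - 3^k))"
    proof -
      have "(\<Sum>k<l. u^a * (t*u)^(3^k)) = (\<Sum>k<l. t^(3^k) * u^(a + 3^k))"
        by (intro sum.cong refl) (simp add: power_mult_distrib power_add mult_ac)
      moreover have "(\<Sum>k<l. u^a * (t*u)^(3^(k+l))) = (\<Sum>k<l. t^(3^(k+l)) * u^(a - 3^k))"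
      proof (intro sum.cong refl)
        fix k assume "k \<in> {..<l}"
        hence "3^k \<le> a" using pk by simp
        hence ua: "u^a = u^(a - 3^k) * u^(3^k)" by (simp flip: power_add)
        have "u^a * (t*u)^(3^(k+l)) = t^(3^(k+l)) * u^(a - 3^k) * (u^(3^(k+l)) * u^(3^k))"
          unfolding ua by (simp add: power_mult_distrib mult_ac)
        thus "u^a * (t*u)^(3^(k+l)) = t^(3^(k+l)) * u^(a - 3^k)" using uk[of k] by simp
      qed
      ultimately show ?thesis by simp
    qed
    also have "\<dots> = poly P u"
      unfolding P_def by (simp add: poly_sum poly_monom sum.distrib)
    finally show ?thesis by simp
  qed
  have cP: "coeff P (2*a) = t^(3^(l-1))"
  proof -
    have "coeff P (2*a) = (\<Sum>k<l. (if a + 3^k = 2*a then t^(3^k) else 0) + (if a - 3^k = 2*a then t^(3^(k+l)) else 0))"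
      unfolding P_def coeff_sum coeff_add coeff_monom by (rule sum.cong) auto
    also have "\<dots> = (\<Sum>k<l. if k = l - 1 then t^(3^k) else 0)"
    proof (rule sum.cong[OF refl])
      fix k assume k: "k \<in> {..<l}"
      have a1: "a \<ge> 1" unfolding a_def by simp
      have "(a + 3^k = 2*a) \<longleftrightarrow> k = l - 1"
      proof -
        have "(a + 3^k = 2*a) \<longleftrightarrow> (3::nat)^k = 3^(l-1)" unfolding a_def by auto
        also have "\<dots> \<longleftrightarrow> k = l - 1" by (rule power_inject_exp) simp
        finally show ?thesis .
      qed
      moreover have "a - 3^k \<noteq> 2*a" using a1 by linarith
      ultimately show "(if a + 3^k = 2*a then t^(3^k) else 0) + (if a - 3^k = 2*a then t^(3^(k+l)) else 0)
          = (if k = l - 1 then t^(3^k) else 0)" by simp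
    qed
    also have "\<dots> = t^(3^(l-1))" using l1 by simp
    finally show ?thesis .
  qed
  hence Pnz: "P \<noteq> 0" using t0 by auto
  have dP: "degree P \<le> 2*a" unfolding P_def
  proof (rule degree_sum_le)
    fix k assume "k \<in> {..<l}"
    hence "3^k \<le> a" using pk by simp
    hence "degree (monom (t^(3^k)) (a + 3^k)) \<le> 2*a" "degree (monom (t^(3^(k+l))) (a - 3^k)) \<le> 2*a"
      using degree_monom_le le_trans by (metis add_le_mono le_refl mult_2, metis diff_le_self le_add1 mult_2)
    thus "degree (monom (t^(3^k)) (a + 3^k) + monom (t^(3^(k+l))) (a - 3^k)) \<le> 2*a"
      by (simp add: degree_add_le)
  qed simp
  define Z where "Z = {i. i < n \<and> Tr (t * \<beta>^i) = 0}"
  define Z2 where "Z2 = Z \<union> (\<lambda>i. i + n) ` Z"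
  have finZ: "finite Z" unfolding Z_def by simp
  have disj: "Z \<inter> (\<lambda>i. i + n) ` Z = {}" unfolding Z_def by auto
  have cZ2: "card Z2 = 2 * card Z"
    unfolding Z2_def using card_Un_disjoint[OF finZ finite_imageI[OF finZ] disj] card_image[of "\<lambda>i. i + n" Z]
    by (simp add: inj_on_def)
  have Z2sub: "Z2 \<subseteq> {..<2*n}" unfolding Z2_def Z_def by auto
  have injb: "inj_on (\<lambda>i. \<beta>^i) Z2"
  proof (rule inj_onI)
    fix i j assume ij: "i \<in> Z2" "j \<in> Z2" "\<beta>^i = \<beta>^j"
    hence "i < 2*n" "j < 2*n" using Z2sub by auto
    thus "i = j" using ij(3) beta_pow_eq by simp
  qed
  have roots: "(\<lambda>i. \<beta>^i) ` Z2 \<subseteq> {x. poly P x = 0}"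
  proof
    fix x assume "x \<in> (\<lambda>i. \<beta>^i) ` Z2"
    then obtain i where i: "i \<in> Z2" "x = \<beta>^i" by blast
    have tr0: "Tr (t * \<beta>^i) = 0"
    proof (cases "i \<in> Z")
      case True thus ?thesis unfolding Z_def by simp
    next
      case False
      then obtain j where j: "j \<in> Z" "i = j + n" using i(1) unfolding Z2_def by blast
      have "t * \<beta>^i = - (t * \<beta>^j)" unfolding j(2) power_add beta_n by simp
      thus ?thesis using j(1) unfolding Z_def by (simp add: Tr_neg)
    qed
    have "x^(3^l) * x = 1" unfolding i(2) using beta_Q
      by (metis power_mult[symmetric] mult.commute power_mult_distrib power_one)
    hence "poly P x = x^a * Tr (t * x)" by (rule evP)
    thus "x \<in> {x. poly P x = 0}" using tr0 i(2) by simp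
  qed
  have "card ((\<lambda>i. \<beta>^i) ` Z2) \<le> degree P" by (rule card_roots_le[OF Pnz roots])
  hence "card Z2 \<le> 2*a" using card_image[OF injb] dP by simp
  thus ?thesis using cZ2 unfolding Z_def a_def by simp
qed

end

lemma hd_diff: fixes c c' :: "'a::ab_group_add poly"
  shows "hamming_dist n c c' = card {i. i < n \<and> coeff (c - c') i \<noteq> 0}"
  unfolding hamming_dist_def by simp

lemma min_dist_fin: fixes C :: "'a::zero poly set" shows "finite {hamming_dist n c c' | c c'. c \<in> C \<and> c' \<in> C \<and> c \<noteq> c'}"
proof -
  have "{hamming_dist n c c' | c c'. c \<in> C \<and> c' \<in> C \<and> c \<noteq> c'} \<subseteq> {..n}"
  proof
    fix x assume "x \<in> {hamming_dist n c c' | c c'. c \<in> C \<and> c' \<in> C \<and> c \<noteq> c'}"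
    then obtain c c' :: "'a poly" where x: "x = hamming_dist n c c'" by blast
    have "x \<le> card {..<n}" unfolding x hamming_dist_def by (rule card_mono) auto
    thus "x \<in> {..n}" by simp
  qed
  thus ?thesis by (rule finite_subset) simp
qed

lemma min_dist_ge:
  fixes C :: "'a::comm_ring_1 poly set"
  assumes "0 \<in> C" "c0 \<in> C" "c0 \<noteq> 0" "\<And>c c'. c \<in> C \<Longrightarrow> c' \<in> C \<Longrightarrow> c - c' \<in> C"
    and "\<And>c. c \<in> C \<Longrightarrow> c \<noteq> 0 \<Longrightarrow> b \<le> card {i. i < n \<and> coeff c i \<noteq> 0}"
  shows "b \<le> min_distance n C"
proof -
  let ?S = "{hamming_dist n c c' | c c'. c \<in> C \<and> c' \<in> C \<and> c \<noteq> c'}"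
  have ne: "?S \<noteq> {}" using assms(1-3) by blast
  have "\<forall>x\<in>?S. b \<le> x"
  proof
    fix x assume "x \<in> ?S"
    then obtain c c' where x: "x = hamming_dist n c c'" "c \<in> C" "c' \<in> C" "c \<noteq> c'" by blast
    show "b \<le> x" unfolding x(1) hd_diff using assms(5)[OF assms(4)[OF x(2,3)]] x(4) by simp
  qed
  thus ?thesis unfolding min_distance_def using Min_ge_iff[OF min_dist_fin ne] by blast
qed

lemma min_dist_le:
  fixes C :: "'a::ab_group_add poly set"
  assumes "0 \<in> C" "v \<in> C" "v \<noteq> 0"
  shows "min_distance n C \<le> card {i. i < n \<and> coeff v i \<noteq> 0}"
proof -
  have "hamming_dist n v 0 \<in> {hamming_dist n c c' | c c'. c \<in> C \<and> c' \<in> C \<and> c \<noteq> c'}"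
    using assms by blast
  hence "min_distance n C \<le> hamming_dist n v 0" unfolding min_distance_def
    by (rule Min_le[OF min_dist_fin])
  thus ?thesis unfolding hd_diff by simp
qed

context tern begin

lemma C_diff: "c \<in> CC \<Longrightarrow> c' \<in> CC \<Longrightarrow> c - c' \<in> CC"
proof -
  assume "c \<in> CC" "c' \<in> CC"
  then obtain r r' where r: "c = r * g" "degree r < 2*l" and r': "c' = r' * g" "degree r' < 2*l"
    unfolding C_eq by blast
  have "c - c' = (r - r') * g" using r r' by (simp add: algebra_simps)
  moreover have "degree (r - r') < 2*l" using r r' degree_diff_less l1 by simp
  ultimately show ?thesis unfolding C_eq by blast
qed

lemma C_zero: "0 \<in> CC"
proof -
  have "(0::'p mod_ring poly) = 0 * g" by simp
  moreover have "degree (0::'p mod_ring poly) < 2*l" using l1 by simp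
  ultimately show ?thesis unfolding C_eq by blast
qed

lemma C_nonzero: "\<exists>c\<in>CC. c \<noteq> 0"
proof (rule ccontr)
  assume "\<not> (\<exists>c\<in>CC. c \<noteq> 0)"
  hence "CC \<subseteq> {0}" by blast
  hence "card CC \<le> card {0::'p mod_ring poly}" by (intro card_mono) auto
  hence "card CC \<le> 1" by simp
  moreover have "(3::nat)^(2*l) > 1" using l1 by (intro one_less_power) auto
  ultimately show False using card_C by simp
qed

lemma phi_zero: "phi 0 = 0"
proof (rule poly_eqI)
  fix i
  have "ie (Tr 0) = 0" using ie_e[of 0] by (simp add: Tr_zero)
  thus "coeff (phi 0) i = coeff 0 i" unfolding coeff_phi by simp
qed

lemma weight_C: assumes "c \<in> CC" "c \<noteq> 0"
  shows "(3^(l-1)+1) div 2 \<le> card {i. i < n \<and> coeff c i \<noteq> 0}"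
proof -
  obtain t where t: "t \<in> K" "c = phi t" using assms(1) C_phi by blast
  have t0: "t \<noteq> 0" using t assms(2) phi_zero by auto
  have tF: "t \<in> Fix" using t K_Fix by auto
  define Z where "Z = {i. i < n \<and> Tr (t * \<beta>^i) = 0}"
  have "{i. i < n \<and> coeff c i \<noteq> 0} = {..<n} - Z"
  proof -
    have "coeff c i = 0 \<longleftrightarrow> Tr (t * \<beta>^i) = 0" if "i < n" for i
      using e_coeff_phi[OF tF that] t(2) e.hom_0_iff by metis
    thus ?thesis unfolding Z_def by auto
  qed
  moreover have "card ({..<n} - Z) = n - card Z" unfolding Z_def by (subst card_Diff_subset) auto
  moreover have "card Z \<le> 3^(l-1)" unfolding Z_def by (rule zero_count[OF t(1) t0])
  moreover have "(3^(l-1)+1) div 2 = n - 3^(l-1)"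
  proof -
    have "(3::nat)^l = 3 * 3^(l-1)" using l1 by (metis power_Suc Suc_pred' less_le_trans zero_less_one)
    hence "2*n = 3 * 3^(l-1) + 1" using n2 by simp
    thus ?thesis by linarith
  qed
  ultimately show ?thesis by simp
qed

lemma mindist_C: "(3^(l-1)+1) div 2 \<le> min_distance n CC"
proof -
  obtain c0 where c0: "c0 \<in> CC" "c0 \<noteq> 0" using C_nonzero by blast
  show ?thesis by (rule min_dist_ge[OF C_zero c0(1) c0(2) C_diff weight_C])
qed

end

lemma alg3:
  fixes a b c :: "'k::field"
  assumes three: "(3::'k) = 0" and nz: "a \<noteq> 0" "b \<noteq> 0" "c \<noteq> 0"
    and s1: "a + b + c = 0" and s2: "inverse a + inverse b + inverse c = 0"
  shows "a = b"
proof -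
  have e2: "a*b + b*c + c*a = 0"
  proof -
    have "a*b*c * (inverse a + inverse b + inverse c) = a*b + b*c + c*a"
      using nz by (simp add: field_simps)
    thus ?thesis using s2 by simp
  qed
  have c: "c = -a - b" using s1 by (simp add: algebra_simps eq_neg_iff_add_eq_0)
  have "(a-b)^2 + (a*b + b*c + c*a) = -(3*a*b)" unfolding c by (simp add: power2_eq_square algebra_simps)
  hence "(a-b)^2 = 0" using e2 three by simp
  thus ?thesis by simp
qed

lemma alg4:
  fixes a b c d :: "'k::field"
  assumes nz: "a \<noteq> 0" "b \<noteq> 0" "c \<noteq> 0" "d \<noteq> 0"
    and s1: "a + b + c + d = 0" and s2: "inverse a + inverse b + inverse c + inverse d = 0"
  shows "a + b = 0 \<or> b + c = 0 \<or> c + a = 0"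
proof -
  have e3: "a*b*c + a*b*d + a*c*d + b*c*d = 0"
  proof -
    have "a*b*c*d * (inverse a + inverse b + inverse c + inverse d) = a*b*c + a*b*d + a*c*d + b*c*d"
      using nz by (simp add: field_simps)
    thus ?thesis using s2 by simp
  qed
  have d: "d = -a - b - c" using s1 by (simp add: algebra_simps eq_neg_iff_add_eq_0)
  have "a*b*c + a*b*d + a*c*d + b*c*d = -((a+b)*(b+c)*(c+a))" unfolding d by (simp add: algebra_simps)
  hence "(a+b)*(b+c)*(c+a) = 0" using e3 by simp
  thus ?thesis by auto
qed

lemma alg_small:
  fixes W :: "'k::field set"
  assumes three: "(3::'k) = 0" and fin: "finite W" and cW: "card W \<le> 4" "W \<noteq> {}"
    and nz: "0 \<notin> W" and neg: "\<forall>w\<in>W. -w \<notin> W"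
    and s1: "(\<Sum>w\<in>W. w) = 0" and s2: "(\<Sum>w\<in>W. inverse w) = 0"
  shows False
proof -
  have "card W \<noteq> 0" using fin cW by simp
  then consider "card W = 1" | "card W = 2" | "card W = 3" | "card W = 4" using cW by linarith
  then show False
  proof cases
    case 1
    then obtain a where "W = {a}" by (rule card_1_singletonE)
    thus False using s1 nz by simp
  next
    case 2
    then obtain a b where W: "W = {a,b}" "a \<noteq> b" unfolding card_2_iff by blast
    hence "b = -a" using s1 by (simp add: eq_neg_iff_add_eq_0 add.commute)
    thus False using neg W by auto
  next
    case 3
    then obtain a b c where W: "W = {a,b,c}" "a \<noteq> b" "b \<noteq> c" "a \<noteq> c" unfolding card_3_iff by blast
    have "a = b" by (rule alg3[OF three]) (use W nz s1 s2 in \<open>auto simp: add.assoc\<close>)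
    thus False using W by simp
  next
    case 4
    hence "card W = Suc 3" by simp
    then obtain a W1 where W1: "W = insert a W1" "a \<notin> W1" "card W1 = 3"
      using card_eq_SucD by blast
    then obtain b c d where W: "W1 = {b,c,d}" "b \<noteq> c" "c \<noteq> d" "b \<noteq> d" unfolding card_3_iff by blast
    have dd: "a \<noteq> b" "a \<noteq> c" "a \<noteq> d" using W1(2) W by auto
    have WW: "W = insert a (insert b (insert c {d}))" using W1 W by simp
    have sum4: "(\<Sum>w\<in>W. f w) = f a + f b + f c + f d" for f :: "'k \<Rightarrow> 'k"
      unfolding WW using dd W(2-4) by (simp add: add.assoc)
    have inW: "a \<in> W" "b \<in> W" "c \<in> W" "d \<in> W" unfolding WW by auto
    have "a + b = 0 \<or> b + c = 0 \<or> c + a = 0"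
    proof (rule alg4)
      show "a \<noteq> 0" "b \<noteq> 0" "c \<noteq> 0" "d \<noteq> 0" using nz inW by auto
      show "a + b + c + d = 0" using s1 sum4[of "\<lambda>w. w"] by simp
      show "inverse a + inverse b + inverse c + inverse d = 0" using s2 sum4[of inverse] by simp
    qed
    moreover have "x + y \<noteq> 0" if "x \<in> W" "y \<in> W" for x y
    proof
      assume "x + y = 0"
      hence "x = -y" by (simp add: add_eq_0_iff2)
      thus False using neg that by auto
    qed
    ultimately show False using inW by blast
  qed
qed


lemma pm_lemma:
  fixes x y s t :: "'a::comm_ring_1"
  assumes "s = 1 \<or> s = -1" "t = 1 \<or> t = -1" "s*x = t*y \<or> s*x = -(t*y)"
  shows "x = y \<or> x = -y"
  using assms by (elim disjE; simp; metis minus_minus)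

context tern begin

lemma beta_pm: assumes "i < n" "j < n" "\<beta>^i = \<beta>^j \<or> \<beta>^i = - (\<beta>^j)" shows "i = j"
proof -
  have bj: "- (\<beta>^j) = \<beta>^(j+n)" by (simp add: power_add beta_n)
  from assms(3) show ?thesis
  proof
    assume "\<beta>^i = \<beta>^j"
    hence "i mod (2*n) = j mod (2*n)" using beta_pow_eq by blast
    thus ?thesis using assms(1,2) by simp
  next
    assume "\<beta>^i = - (\<beta>^j)"
    hence "i mod (2*n) = (j+n) mod (2*n)" using beta_pow_eq bj by metis
    hence "i = j + n" using assms(1,2) by simp
    thus ?thesis using assms(1) by simp
  qed
qed

lemma e_sign: "c \<noteq> 0 \<Longrightarrow> e c = 1 \<or> e c = -1"
proof -
  assume c: "c \<noteq> 0"
  have "e c * ((e c)^2 - 1) = 0" using e_cube[of c] by (simp add: algebra_simps power2_eq_square power3_eq_cube)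
  hence "(e c)^2 = 1" using c by simp
  thus ?thesis by (simp add: power2_eq_1_iff)
qed

lemma two_nz: "(2::'k) \<noteq> 0"
proof
  assume "(2::'k) = 0"
  hence "(3::'k) = 1" by (metis add.commute add_0 one_plus_numeral semiring_norm(3))
  thus False using three0 by simp
qed

lemma weight_D:
  assumes dv: "degree v < n" and ev0: "ev v = 0" and v0: "v \<noteq> 0"
  shows "5 \<le> card {i. i < n \<and> coeff v i \<noteq> 0}"
proof (rule ccontr)
  define S where "S = {i. i < n \<and> coeff v i \<noteq> 0}"
  assume "\<not> 5 \<le> card {i. i < n \<and> coeff v i \<noteq> 0}"
  hence cS: "card S \<le> 4" unfolding S_def by simp
  define u where "u i = e (coeff v i) * \<beta>^i" for i
  have finS: "finite S" unfolding S_def by simp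
  have Sne: "S \<noteq> {}"
  proof -
    have "coeff v (degree v) \<noteq> 0" using v0 by simp
    thus ?thesis unfolding S_def using dv by blast
  qed
  have sgn: "e (coeff v i) = 1 \<or> e (coeff v i) = -1" if "i \<in> S" for i
    using e_sign that unfolding S_def by blast
  have unz: "u i \<noteq> 0" if "i \<in> S" for i
    using sgn[OF that] beta_nz unfolding u_def by auto
  have upm: "i = j" if "i \<in> S" "j \<in> S" "u i = u j \<or> u i = - u j" for i j
  proof (rule beta_pm)
    show "i < n" "j < n" using that unfolding S_def by auto
    show "\<beta>^i = \<beta>^j \<or> \<beta>^i = - (\<beta>^j)"
      using pm_lemma[OF sgn[OF that(1)] sgn[OF that(2)]] that(3) unfolding u_def by blast
  qed
  have inj: "inj_on u S" using upm by (auto simp: inj_on_def)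
  define W where "W = u ` S"
  have finW: "finite W" unfolding W_def using finS by simp
  have cW: "card W \<le> 4" unfolding W_def using card_image[OF inj] cS by simp
  have Wne: "W \<noteq> {}" unfolding W_def using Sne by simp
  have nzW: "0 \<notin> W" unfolding W_def using unz by auto
  have negW: "\<forall>w\<in>W. -w \<notin> W"
  proof (intro ballI notI)
    fix w assume "w \<in> W" "-w \<in> W"
    then obtain i j where ij: "i \<in> S" "j \<in> S" "w = u i" "-w = u j" unfolding W_def by blast
    hence "i = j" using upm[of i j] by (metis minus_minus)
    hence "u i = - u i" using ij by simp
    hence "2 * u i = 0" by simp
    thus False using two_nz unz[OF ij(1)] by simp
  qed
  have sumS: "(\<Sum>i\<in>S. u i) = 0"
  proof -
    have "ev v = (\<Sum>i<n. e (coeff v i) * \<beta>^i)" by (rule ev_sum[OF dv])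
    also have "\<dots> = (\<Sum>i\<in>S. u i)" unfolding u_def
      by (rule sum.mono_neutral_right) (auto simp: S_def)
    finally show ?thesis using ev0 by simp
  qed
  have s1: "(\<Sum>w\<in>W. w) = 0" unfolding W_def using sum.reindex[OF inj, of "\<lambda>w. w"] sumS by simp
  have uinv: "inverse (u i) = (u i)^(3^l)" if "i \<in> S" for i
  proof -
    have "(e (coeff v i))^(3^l) * e (coeff v i) = 1"
      using e_pow3[of "coeff v i" l] sgn[OF that] by auto
    moreover have "(\<beta>^i)^(3^l) * \<beta>^i = 1"
    proof -
      have "(\<beta>^i)^(3^l) * \<beta>^i = (\<beta>^(3^l) * \<beta>)^i"
        by (simp only: power_mult[symmetric] mult.commute power_mult_distrib)
      thus ?thesis using beta_Q by simp
    qed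
    moreover have "(u i)^(3^l) * u i = ((e (coeff v i))^(3^l) * e (coeff v i)) * ((\<beta>^i)^(3^l) * \<beta>^i)"
      unfolding u_def power_mult_distrib by (simp only: mult_ac)
    ultimately have "(u i)^(3^l) * u i = 1" by simp
    thus ?thesis by (metis inverse_unique mult.commute)
  qed
  have s2: "(\<Sum>w\<in>W. inverse w) = 0"
  proof -
    have "(\<Sum>w\<in>W. inverse w) = (\<Sum>i\<in>S. inverse (u i))" unfolding W_def by (rule sum.reindex[OF inj, unfolded comp_def])
    also have "\<dots> = (\<Sum>i\<in>S. (u i)^(3^l))" using uinv by simp
    also have "\<dots> = (\<Sum>i\<in>S. u i)^(3^l)" by (rule frob_sum[OF k3, symmetric])
    finally show ?thesis using sumS by (simp add: power_0_left)
  qed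
  show False by (rule alg_small[OF three0 finW cW Wne nzW negW s1 s2])
qed

end

context tern begin

definition Uc :: "'k set" where "Uc = {x. x^(3^l) * x = 1}"

lemma beta_pow_Uc: "\<beta>^i \<in> Uc"
proof -
  have "(\<beta>^i)^(3^l) * \<beta>^i = (\<beta>^(3^l) * \<beta>)^i"
    by (simp only: power_mult[symmetric] mult.commute power_mult_distrib)
  thus ?thesis unfolding Uc_def using beta_Q by simp
qed

lemma Uc_eq: "Uc = (\<lambda>i. \<beta>^i) ` {..<2*n}"
proof -
  define N where "N = 3^l + (1::nat)"
  define P :: "'k poly" where "P = monom 1 N + [:-1:]"
  have N2: "N = 2*n" unfolding N_def using n2 by simp
  have d1: "degree [:-1::'k:] < degree (monom (1::'k) N)" using N2 n_pos by (simp add: degree_monom_eq)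
  have dP: "degree P = N" unfolding P_def using degree_add_eq_left[OF d1] by (simp add: degree_monom_eq)
  hence Pnz: "P \<noteq> 0" using N2 n_pos by auto
  have sub: "Uc \<subseteq> {x. poly P x = 0}" unfolding Uc_def P_def N_def
    by (auto simp: poly_monom power_add mult.commute)
  have finU: "finite Uc" by (rule finite_roots_sub[OF Pnz sub])
  have cU: "card Uc \<le> 2*n" using card_roots_le[OF Pnz sub] dP N2 by simp
  have inj: "inj_on (\<lambda>i. \<beta>^i) {..<2*n}" by (auto simp: inj_on_def beta_pow_eq)
  have sub2: "(\<lambda>i. \<beta>^i) ` {..<2*n} \<subseteq> Uc" using beta_pow_Uc by blast
  have "card ((\<lambda>i. \<beta>^i) ` {..<2*n}) = 2*n" using card_image[OF inj] by simp
  hence "card ((\<lambda>i. \<beta>^i) ` {..<2*n}) = card Uc" using cU card_mono[OF finU sub2] by simp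
  thus ?thesis using card_subset_eq[OF finU sub2] by simp
qed

lemma Uc_card: "finite Uc \<and> card Uc = 2*n"
proof -
  have inj: "inj_on (\<lambda>i. \<beta>^i) {..<2*n}" by (auto simp: inj_on_def beta_pow_eq)
  show ?thesis unfolding Uc_eq using card_image[OF inj] by simp
qed

lemma Uc_rep: assumes "x \<in> Uc" shows "\<exists>c j. j < n \<and> c \<noteq> 0 \<and> x = e c * \<beta>^j"
proof -
  obtain i where i: "i < 2*n" "x = \<beta>^i" using assms unfolding Uc_eq by blast
  show ?thesis
  proof (cases "i < n")
    case True
    hence "i < n \<and> (1::'p mod_ring) \<noteq> 0 \<and> x = e 1 * \<beta>^i" using i by simp
    thus ?thesis by blast
  next
    case False
    define j where "j = i - n"
    have j: "j < n" "i = j + n" using i False unfolding j_def by auto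
    have "x = e (-1) * \<beta>^j" unfolding i(2) j(2) power_add beta_n by (simp add: hom_distribs)
    moreover have "(-1::'p mod_ring) \<noteq> 0" by simp
    ultimately show ?thesis using j by blast
  qed
qed

lemma build_word:
  assumes finW: "finite W" and WU: "W \<subseteq> Uc" and negW: "\<forall>a\<in>W. \<forall>b\<in>W. a + b \<noteq> 0"
    and sW: "(\<Sum>w\<in>W. w) = 0"
  shows "\<exists>v. degree v < n \<and> ev v = 0 \<and> card {i. i < n \<and> coeff v i \<noteq> 0} = card W"
proof -
  have "\<forall>w\<in>W. \<exists>c. \<exists>j. j < n \<and> c \<noteq> 0 \<and> w = e c * \<beta>^j" using Uc_rep WU by blast
  then obtain cf where cf: "\<forall>w\<in>W. \<exists>j. j < n \<and> cf w \<noteq> 0 \<and> w = e (cf w) * \<beta>^j" by metis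
  then obtain jx where jx: "\<forall>w\<in>W. jx w < n \<and> cf w \<noteq> 0 \<and> w = e (cf w) * \<beta>^(jx w)" by metis
  have injj: "inj_on jx W"
  proof (rule inj_onI)
    fix w w' assume w: "w \<in> W" "w' \<in> W" "jx w = jx w'"
    have "e (cf w) * w = e (cf w) * e (cf w) * \<beta>^(jx w)" using jx w(1) by (simp add: mult.assoc)
    moreover have "e (cf w) * e (cf w) = 1" using e_sign[of "cf w"] jx w(1) by auto
    ultimately have bw: "\<beta>^(jx w) = e (cf w) * w" by simp
    have "w' = e (cf w') * (e (cf w) * w)" using jx w bw by metis
    moreover have "e (cf w') * e (cf w) = 1 \<or> e (cf w') * e (cf w) = -1"
      using e_sign[of "cf w"] e_sign[of "cf w'"] jx w(1,2) by auto
    ultimately have "w' = w \<or> w' = - w" by (auto simp: mult.assoc[symmetric])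
    moreover have "w' \<noteq> - w" using negW w(1,2) by (metis add.commute neg_eq_iff_add_eq_0)
    ultimately show "w = w'" by simp
  qed
  define v where "v = (\<Sum>w\<in>W. monom (cf w) (jx w))"
  have cv: "coeff v i = (\<Sum>w\<in>W. if jx w = i then cf w else 0)" for i
    unfolding v_def coeff_sum coeff_monom by (rule sum.cong) auto
  have cv2: "coeff v (jx w0) = cf w0" if "w0 \<in> W" for w0
  proof -
    have "coeff v (jx w0) = (\<Sum>w\<in>W. if w = w0 then cf w else 0)"
      unfolding cv by (rule sum.cong[OF refl]) (use injj that in \<open>auto simp: inj_on_def\<close>)
    also have "\<dots> = cf w0" using that finW by simp
    finally show ?thesis .
  qed
  have cv3: "coeff v i = 0" if "i \<notin> jx ` W" for i
    unfolding cv using that by (intro sum.neutral) auto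
  have supp: "{i. i < n \<and> coeff v i \<noteq> 0} = jx ` W"
  proof safe
    fix i assume "i < n" "coeff v i \<noteq> 0"
    thus "i \<in> jx ` W" using cv3 by blast
  next
    fix w assume "w \<in> W"
    thus "jx w < n" using jx by blast
  next
    fix w assume "w \<in> W" "coeff v (jx w) = 0"
    thus False using cv2 jx by auto
  qed
  have "degree v < n" unfolding v_def
  proof (rule degree_sum_less)
    fix w assume "w \<in> W"
    thus "degree (monom (cf w) (jx w)) < n" using jx degree_monom_le le_less_trans by blast
  qed (rule n_pos)
  moreover have "ev v = 0"
  proof -
    have "ev v = (\<Sum>w\<in>W. e (cf w) * \<beta>^(jx w))" unfolding v_def
      by (simp add: hom_distribs poly_sum poly_monom)
    also have "\<dots> = (\<Sum>w\<in>W. w)" using jx by (intro sum.cong refl) auto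
    finally show ?thesis using sW by simp
  qed
  moreover have "card {i. i < n \<and> coeff v i \<noteq> 0} = card W" unfolding supp using card_image[OF injj] .
  ultimately show ?thesis by blast
qed

end

context tern begin

definition Fl :: "'k set" where "Fl = {z. z^(3^l) = z}"

lemma three_ge: "(3::nat)^l \<ge> 9"
proof -
  have "(3::nat)^l \<ge> 3^2" using power_increasing[OF l2, of "3::nat"] by linarith
  thus ?thesis by simp
qed

lemma Fl_card: "finite Fl \<and> card Fl \<le> 3^l"
proof -
  define N where "N = (3::nat)^l"
  have N2: "N \<ge> 2" unfolding N_def using three_ge by simp
  define P :: "'k poly" where "P = monom 1 N + monom (-1) 1"
  have d1: "degree (monom (-1::'k) 1) < degree (monom (1::'k) N)" using N2 by (simp add: degree_monom_eq)
  have dP: "degree P = N" unfolding P_def using degree_add_eq_left[OF d1] by (simp add: degree_monom_eq)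
  hence Pnz: "P \<noteq> 0" using N2 by auto
  have sub: "Fl \<subseteq> {x. poly P x = 0}" unfolding Fl_def P_def N_def by (auto simp: poly_monom)
  show ?thesis using card_roots_le[OF Pnz sub] finite_roots_sub[OF Pnz sub] dP N_def by simp
qed

lemma Fl_neg: "z \<in> Fl \<Longrightarrow> - z \<in> Fl" unfolding Fl_def by (simp add: frob_neg)
lemma Fl_diff: "a \<in> Fl \<Longrightarrow> b \<in> Fl \<Longrightarrow> a - b \<in> Fl" unfolding Fl_def by (simp add: frob_diff[OF k3])
lemma Fl_one: "1 \<in> Fl" unfolding Fl_def by simp
lemma Fl_zero: "0 \<in> Fl" unfolding Fl_def by (simp add: power_0_left)
lemma Fl_mone: "-1 \<in> Fl" using Fl_neg[OF Fl_one] .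

lemma two_eq: "(2::'k) = -1"
proof -
  have "(2::'k) + 1 = 3" by simp
  thus ?thesis using three0 by (simp add: eq_neg_iff_add_eq_0)
qed

lemma one_ne_mone: "(1::'k) \<noteq> -1"
  using two_nz by (metis one_add_one add_eq_0_iff2)

definition G' :: "'k set" where "G' = Fl - {0, 1, -1}"

lemma G'_card: "finite G' \<and> card G' \<le> 3^l - 3"
proof -
  have sub: "{0, 1, -1} \<subseteq> Fl" using Fl_zero Fl_one Fl_mone by auto
  have c3: "card {0::'k, 1, -1} = 3" using one_ne_mone by simp
  have "card G' = card Fl - 3" unfolding G'_def using card_Diff_subset[OF _ sub] c3 by simp
  thus ?thesis using Fl_card unfolding G'_def by (simp add: diff_le_mono)
qed

lemma G'_neg: "z \<in> G' \<Longrightarrow> - z \<in> G'" unfolding G'_def using Fl_neg by (auto simp: minus_equation_iff)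

lemma G'_one_minus: "t \<in> G' \<Longrightarrow> 1 - t \<in> G'"
proof -
  assume t: "t \<in> G'"
  have "1 - t \<in> Fl" using Fl_diff[OF Fl_one] t unfolding G'_def by blast
  moreover have "1 - t \<noteq> -1"
  proof
    assume "1 - t = -1" hence "t = 2" by (simp add: algebra_simps)
    thus False using t two_eq unfolding G'_def by simp
  qed
  ultimately show ?thesis using t unfolding G'_def by auto
qed

end

context tern begin

definition U' :: "'k set" where "U' = {x \<in> Uc. x^2 \<noteq> 1 \<and> x^2 \<noteq> -1}"

abbreviation ff :: "'k \<Rightarrow> 'k" where "ff x \<equiv> x + inverse x"

definition T' :: "'k set" where "T' = ff ` U'"

lemma Uc_nz: "x \<in> Uc \<Longrightarrow> x \<noteq> 0" unfolding Uc_def by auto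

lemma Uc_pow: assumes "x \<in> Uc" shows "x^(3^l) = inverse x"
proof -
  have "x^(3^l) * x = 1" using assms unfolding Uc_def by simp
  hence "x * x^(3^l) = 1" by (simp only: mult.commute)
  hence "inverse x = x^(3^l)" by (rule inverse_unique)
  thus ?thesis by simp
qed

lemma ff_G': assumes "x \<in> U'" shows "ff x \<in> G'"
proof -
  have xU: "x \<in> Uc" and x2: "x^2 \<noteq> 1" "x^2 \<noteq> -1" using assms unfolding U'_def by auto
  have x0: "x \<noteq> 0" using Uc_nz[OF xU] .
  have xm: "x * ff x = x^2 + 1" using x0 by (simp add: algebra_simps power2_eq_square)
  have "(ff x)^(3^l) = x^(3^l) + (inverse x)^(3^l)" by (rule frob_add[OF k3])
  also have "\<dots> = inverse x + inverse (x^(3^l))" by (simp only: Uc_pow[OF xU] power_inverse)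
  also have "\<dots> = ff x" by (simp only: Uc_pow[OF xU] inverse_inverse_eq add.commute)
  finally have "(ff x)^(3^l) = ff x" .
  hence "ff x \<in> Fl" unfolding Fl_def by simp
  moreover have "ff x \<noteq> 0"
  proof
    assume "ff x = 0" hence "x^2 + 1 = 0" using xm by simp
    hence "x^2 = -1" by (simp add: eq_neg_iff_add_eq_0)
    thus False using x2 by simp
  qed
  moreover have "ff x \<noteq> 1"
  proof
    assume "ff x = 1" hence h: "x^2 + 1 = x" using xm by simp
    have "(x+1)^2 = (x^2 + 1 - x) + 3*x" by (simp add: algebra_simps power2_eq_square)
    hence "(x+1)^2 = 0" using h three0 by simp
    hence "x = -1" by (simp add: eq_neg_iff_add_eq_0)
    thus False using x2 by simp
  qed
  moreover have "ff x \<noteq> -1"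
  proof
    assume "ff x = -1" hence h: "x^2 + 1 = -x" using xm by simp
    have "(x-1)^2 = (x^2 + 1 + x) - 3*x" by (simp add: algebra_simps power2_eq_square)
    hence "(x-1)^2 = 0" using h three0 by simp
    hence "x = 1" by simp
    thus False using x2 by simp
  qed
  ultimately show ?thesis unfolding G'_def by simp
qed

lemma T'_G': "T' \<subseteq> G'" unfolding T'_def using ff_G' by blast

lemma U'_neg: "x \<in> U' \<Longrightarrow> -x \<in> U'"
proof -
  assume x: "x \<in> U'"
  have "(-x)^(3^l) * (-x) = x^(3^l) * x" unfolding frob_neg by simp
  thus "-x \<in> U'" using x unfolding U'_def Uc_def by simp
qed

lemma U'_inv: "x \<in> U' \<Longrightarrow> inverse x \<in> U'"
proof -
  assume x: "x \<in> U'"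
  have xU: "x \<in> Uc" using x unfolding U'_def by simp
  have x0: "x \<noteq> 0" by (rule Uc_nz[OF xU])
  have "inverse (x^(3^l) * x) = (inverse x)^(3^l) * inverse x" by (simp only: inverse_mult_distrib power_inverse)
  moreover have "x^(3^l) * x = 1" using xU unfolding Uc_def by simp
  ultimately have "(inverse x)^(3^l) * inverse x = 1" by simp
  hence "inverse x \<in> Uc" unfolding Uc_def by simp
  moreover have i2: "(inverse x)^2 = inverse (x^2)" by (rule power_inverse)
  have "(inverse x)^2 \<noteq> 1"
  proof
    assume "(inverse x)^2 = 1"
    hence "inverse (x^2) = 1" using i2 by simp
    hence "x^2 = 1" by (metis inverse_inverse_eq inverse_1)
    thus False using x unfolding U'_def by simp
  qed
  moreover have "(inverse x)^2 \<noteq> -1"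
  proof
    assume "(inverse x)^2 = -1"
    hence "inverse (x^2) = -1" using i2 by simp
    hence "x^2 = -1" by (metis inverse_inverse_eq inverse_1 inverse_minus_eq)
    thus False using x unfolding U'_def by simp
  qed
  ultimately show ?thesis unfolding U'_def by simp
qed

lemma T'_neg: "t \<in> T' \<Longrightarrow> - t \<in> T'"
proof -
  assume "t \<in> T'"
  then obtain x where x: "x \<in> U'" "t = ff x" unfolding T'_def by blast
  have "- t = ff (-x)" using x(2) by (simp add: inverse_minus_eq)
  thus "- t \<in> T'" unfolding T'_def using U'_neg[OF x(1)] by blast
qed

end

context tern begin

lemma U'_card: "finite U' \<and> 3^l - 3 \<le> card U'"
proof -
  define P :: "'k poly" where "P = monom 1 4 + [:-1:]"
  have d1: "degree [:-1::'k:] < degree (monom (1::'k) 4)" by (simp add: degree_monom_eq)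
  have dP: "degree P = 4" unfolding P_def using degree_add_eq_left[OF d1] by (simp add: degree_monom_eq)
  hence Pnz: "P \<noteq> 0" by auto
  have sub: "Uc - U' \<subseteq> {x. poly P x = 0}"
  proof
    fix x assume "x \<in> Uc - U'"
    hence "x^2 = 1 \<or> x^2 = -1" unfolding U'_def by auto
    hence "x^4 = 1" by (metis (no_types, lifting) power2_minus power_mult numeral_Bit0 mult_2 power_one numeral_times_numeral semiring_norm(12) power_mult_numeral)
    thus "x \<in> {x. poly P x = 0}" unfolding P_def by (simp add: poly_monom)
  qed
  have c4: "card (Uc - U') \<le> 4" using card_roots_le[OF Pnz sub] dP by simp
  have finU: "finite Uc" "card Uc = 2*n" using Uc_card by auto
  have finU': "finite U'" using finU(1) unfolding U'_def by simp
  have "Uc = U' \<union> (Uc - U')" unfolding U'_def by auto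
  hence "card Uc \<le> card U' + card (Uc - U')" by (metis card_Un_le)
  hence "2*n \<le> card U' + 4" using c4 finU(2) by linarith
  thus ?thesis using finU' n2 by simp
qed

lemma fiber_card: "card {x \<in> U'. ff x = t} \<le> 2"
proof -
  define Q :: "'k poly" where "Q = [:1, -t, 1:]"
  have Qnz: "Q \<noteq> 0" unfolding Q_def by simp
  have dQ: "degree Q = 2" unfolding Q_def by simp
  have sub: "{x \<in> U'. ff x = t} \<subseteq> {x. poly Q x = 0}"
  proof safe
    fix x assume x: "x \<in> U'" "t = ff x"
    have x0: "x \<noteq> 0" using x(1) Uc_nz unfolding U'_def by auto
    have "poly Q x = 1 - t * x + x * x" unfolding Q_def by (simp add: algebra_simps)
    also have "\<dots> = 0" unfolding x(2) using x0 by (simp add: algebra_simps)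
    finally show "poly Q x = 0" .
  qed
  show ?thesis using card_roots_le[OF Qnz sub] dQ by simp
qed

lemma T'_card: "finite T' \<and> 3^l - 3 \<le> 2 * card T'"
proof -
  have finT: "finite T'" using T'_G' G'_card finite_subset by blast
  have "U' = (\<Union>t\<in>T'. {x \<in> U'. ff x = t})" unfolding T'_def by auto
  hence "card U' \<le> (\<Sum>t\<in>T'. card {x \<in> U'. ff x = t})" using card_UN_le[OF finT] by metis
  also have "\<dots> \<le> (\<Sum>t\<in>T'. 2)" by (rule sum_mono) (rule fiber_card)
  also have "\<dots> = 2 * card T'" by simp
  finally show ?thesis using U'_card finT by simp
qed

lemma exists_pair: "\<exists>t\<in>T'. 1 - t \<in> T'"
proof (rule ccontr)
  assume "\<not> (\<exists>t\<in>T'. 1 - t \<in> T')"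
  hence H: "\<And>t. t \<in> T' \<Longrightarrow> 1 - t \<notin> T'" by blast
  let ?R = "(\<lambda>t. 1 - t) ` T'"
  have finT: "finite T'" and cT: "3^l - 3 \<le> 2 * card T'" using T'_card by auto
  have finG: "finite G'" and cG: "card G' \<le> 3^l - 3" using G'_card by auto
  have injR: "inj_on (\<lambda>t. 1 - t) T'" by (auto simp: inj_on_def)
  have cR: "card ?R = card T'" using card_image[OF injR] .
  have disj: "T' \<inter> ?R = {}" using H by auto
  have RG: "?R \<subseteq> G'" using T'_G' G'_one_minus by blast
  have UG: "T' \<union> ?R \<subseteq> G'" using RG T'_G' by blast
  have "card (T' \<union> ?R) = 2 * card T'" using card_Un_disjoint[OF finT _ disj] finT cR by simp
  hence "card G' \<le> card (T' \<union> ?R)" using cT cG by linarith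
  hence eqG: "T' \<union> ?R = G'" using card_seteq[OF finG UG] by blast
  have "T' \<noteq> {}"
  proof
    assume "T' = {}" hence "3^l - 3 \<le> (0::nat)" using cT by simp
    thus False using three_ge by simp
  qed
  then obtain t where t: "t \<in> T'" by blast
  have tG: "t \<in> G'" using t T'_G' by blast
  have "t - 1 \<in> G'" using G'_neg[OF G'_one_minus[OF tG]] by simp
  moreover have "t - 1 \<notin> T'"
  proof
    assume "t - 1 \<in> T'"
    hence "1 - t \<in> T'" using T'_neg by fastforce
    thus False using H[OF t] by simp
  qed
  ultimately have "t - 1 \<in> ?R" using eqG by blast
  then obtain s where s: "s \<in> T'" "t - 1 = 1 - s" by blast
  have "s = 2 - t" using s(2) by (simp add: algebra_simps)
  hence "s = -1 - t" using two_eq by simp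
  hence "-s = 1 + t" by simp
  hence "1 + t \<in> T'" using T'_neg[OF s(1)] by simp
  moreover have "1 - (-t) \<notin> T'" using H[OF T'_neg[OF t]] .
  ultimately show False by simp
qed

end

context tern begin

lemma ff_inv: "ff (inverse z) = ff z" by (simp add: add.commute)

lemma pairAB: assumes "ff a = t" "ff b = 1 - t" "t \<in> G'"
  shows "a \<noteq> b \<and> a + b \<noteq> 0"
proof
  show "a \<noteq> b"
  proof
    assume "a = b"
    hence "t = 1 - t" using assms by simp
    hence "2 * t = 1" by (simp add: algebra_simps)
    hence "t = -1" using two_eq by (simp add: minus_equation_iff)
    thus False using assms(3) unfolding G'_def by simp
  qed
  show "a + b \<noteq> 0"
  proof
    assume "a + b = 0"
    hence "b = -a" by (simp add: eq_neg_iff_add_eq_0 add.commute)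
    hence "ff b = - ff a" by (simp add: inverse_minus_eq)
    hence "1 - t = - t" using assms by simp
    thus False by simp
  qed
qed

lemma U'_props: assumes "a \<in> U'" shows "a \<noteq> 0" "a \<noteq> 1" "a \<noteq> -1" "a + a \<noteq> 0" "a \<in> Uc" "a \<noteq> inverse a"
proof -
  show aU: "a \<in> Uc" using assms unfolding U'_def by simp
  show a0: "a \<noteq> 0" using Uc_nz[OF aU] .
  have a2: "a^2 \<noteq> 1" using assms unfolding U'_def by simp
  thus "a \<noteq> 1" "a \<noteq> -1" by auto
  show "a + a \<noteq> 0" using two_nz a0 by (simp flip: mult_2)
  show "a \<noteq> inverse a"
  proof
    assume "a = inverse a"
    hence "a * a = 1" using a0 by (metis right_inverse)
    thus False using a2 by (simp add: power2_eq_square)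
  qed
qed

lemma mone_Uc: "-1 \<in> Uc"
proof -
  have "odd ((3::nat)^l)" by simp
  hence "(-1::'k)^(3^l) = -1" by simp
  thus ?thesis unfolding Uc_def by simp
qed

lemma exists_word5: "\<exists>v. degree v < n \<and> ev v = 0 \<and> card {i. i < n \<and> coeff v i \<noteq> 0} = 5"
proof -
  obtain t where t: "t \<in> T'" "1 - t \<in> T'" using exists_pair by blast
  have tG: "t \<in> G'" using t T'_G' by blast
  obtain x where x0: "t = ff x" "x \<in> U'" using t(1) unfolding T'_def by (rule imageE)
  hence x: "x \<in> U'" "ff x = t" by simp_all
  obtain y where y0: "1 - t = ff y" "y \<in> U'" using t(2) unfolding T'_def by (rule imageE)
  hence y: "y \<in> U'" "ff y = 1 - t" by simp_all
  have xi: "inverse x \<in> U'" "ff (inverse x) = t"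
    by (rule U'_inv[OF x(1)]) (rule trans[OF ff_inv x(2)])
  have yi: "inverse y \<in> U'" "ff (inverse y) = 1 - t"
    by (rule U'_inv[OF y(1)]) (rule trans[OF ff_inv y(2)])
  have p1: "x \<noteq> y \<and> x + y \<noteq> 0" by (rule pairAB[OF x(2) y(2) tG])
  have p2: "x \<noteq> inverse y \<and> x + inverse y \<noteq> 0" by (rule pairAB[OF x(2) yi(2) tG])
  have p3: "inverse x \<noteq> y \<and> inverse x + y \<noteq> 0" by (rule pairAB[OF xi(2) y(2) tG])
  have p4: "inverse x \<noteq> inverse y \<and> inverse x + inverse y \<noteq> 0" by (rule pairAB[OF xi(2) yi(2) tG])
  have t0: "t \<noteq> 0" "1 - t \<noteq> 0" using tG G'_one_minus[OF tG] unfolding G'_def by auto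
  note px = U'_props[OF x(1)] and pxi = U'_props[OF xi(1)] and py = U'_props[OF y(1)] and pyi = U'_props[OF yi(1)]
  define W where "W = {x, inverse x, y, inverse y, -1}"
  have finW: "finite W" unfolding W_def by simp
  have WU: "W \<subseteq> Uc" unfolding W_def using px pxi py pyi mone_Uc by auto
  have m2: "(-1::'k) + -1 \<noteq> 0" using two_nz by (metis minus_add_distrib neg_equal_0_iff_equal one_add_one)
  have negW: "\<forall>a\<in>W. \<forall>b\<in>W. a + b \<noteq> 0"
    unfolding W_def using p1 p2 p3 p4 px pxi py pyi x(2) y(2) t0 m2
    by (auto simp: add.commute)
  have nm: "x \<notin> {inverse x, y, inverse y, -1}" "inverse x \<notin> {y, inverse y, -1}" "y \<notin> {inverse y, -1}"
    "inverse y \<noteq> -1"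
    using p1 p2 p3 p4 px pxi py pyi by auto
  have sW: "(\<Sum>w\<in>W. w) = x + inverse x + (y + inverse y) + -1"
    unfolding W_def using nm by (simp add: add.assoc)
  hence "(\<Sum>w\<in>W. w) = 0" using x(2) y(2) by simp
  moreover have "card W = 5" unfolding W_def using nm by simp
  ultimately show ?thesis using build_word[OF finW WU negW] by metis
qed

abbreviation DD :: "'p mod_ring poly set" where "DD \<equiv> dual_code n CC"

lemma mindist_D: "min_distance n DD = 5"
proof -
  obtain v where v: "degree v < n" "ev v = 0" "card {i. i < n \<and> coeff v i \<noteq> 0} = 5"
    using exists_word5 by blast
  have vD: "v \<in> DD" unfolding dual_eq using v by simp
  have v0: "v \<noteq> 0" using v(3) by (auto simp: card_eq_0_iff)
  have zD: "0 \<in> DD" unfolding dual_eq using n_pos by simp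
  have diffD: "c - c' \<in> DD" if "c \<in> DD" "c' \<in> DD" for c c'
    using that unfolding dual_eq by (auto simp: hom_distribs intro: degree_diff_less)
  have wD: "5 \<le> card {i. i < n \<and> coeff c i \<noteq> 0}" if "c \<in> DD" "c \<noteq> 0" for c
    using that unfolding dual_eq by (auto intro: weight_D)
  have "5 \<le> min_distance n DD" by (rule min_dist_ge[OF zD vD v0 diffD wD])
  moreover have "min_distance n DD \<le> 5" using min_dist_le[OF zD vD v0, where n=n] v(3) by simp
  ultimately show ?thesis by simp
qed

lemma main: "code_dim CC = 2 * l
       \<and> min_distance n CC \<ge> (3 ^ (l - 1) + 1) div 2
       \<and> code_dim DD = n - 2 * l
       \<and> min_distance n DD = 5"
  using dim_C mindist_C dim_D mindist_D by simp

end

theorem theorem20: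
  fixes l n :: nat and \<beta> :: "'k::field" and M :: "'p::prime_card mod_ring poly"
  assumes "CARD('p) = 3"
    and "CHAR('k) = 3"
    and "l \<ge> 2"
    and "n = (3 ^ l + 1) div 2"
    and "primitive_root_of_unity (2 * n) \<beta>"
    and "is_min_poly \<beta> M"
  shows "code_dim (negacyclic_code_check n M) = 2 * l
       \<and> min_distance n (negacyclic_code_check n M) \<ge> (3 ^ (l - 1) + 1) div 2
       \<and> code_dim (dual_code n (negacyclic_code_check n M)) = n - 2 * l
       \<and> min_distance n (dual_code n (negacyclic_code_check n M)) = 5"
proof -
  interpret t: tern l n \<beta> M using assms by unfold_locales auto
  show ?thesis using t.main by simp
qed

end
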